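(* Let $(X_t)_{t\ge 0}$ be the gamma process with parameters $a=b=1$, so that for each $t>0$ the random variable $X_t$ has density $x^{t-1}e^{-x}/\Gamma(t)$ on $(0,\infty)$. Then for every $N\in\mathbb{N}$ there is a constant $C_N$ such that for all sufficiently large $t$, \[ \bigl|\,\mathbb{E}\,\zeta(1/2+iX_t) - 1\,\bigr| \le C_N\, t^{-N}, \] i.e. $\mathbb{E}\,\zeta(1/2+iX_t) = 1 + O(t^{-N})$.
   Context: $\zeta$ denotes the Riemann zeta function. The gamma process with parameters $a=b=1$ has time-$t$ marginal with density $x^{t-1}e^{-x}/\Gamma(t)$ on $(0,\infty)$ and characteristic function $\mathbb{E}e^{iuX_t}=(1-iu)^{-t}$. *)

theory Defs
  imports "HOL-Probability.Probability"
begin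

text \<open>Riemann zeta function: the value at s of the (unique) holomorphic continuation
  to the punctured plane of the Dirichlet series sum n^(-s), Re s > 1.
  (At s = 1 the value is unspecified.)\<close>
definition riemann_zeta :: "complex \<Rightarrow> complex" where
  "riemann_zeta s = (THE z. \<exists>f. f holomorphic_on (- {1}) \<and>
       (\<forall>w. 1 < Re w \<longrightarrow> f w = (\<Sum>n. 1 / (of_nat (Suc n)) powr w)) \<and> f s = z)"

definition gamma_density :: "real \<Rightarrow> real \<Rightarrow> real" where
  "gamma_density t x = (if 0 < x then x powr (t - 1) * exp (- x) / Gamma t else 0)"

end

theory Submission
  imports Defs "HOL-Complex_Analysis.Complex_Analysis" "HOL-Real_Asymp.Real_Asymp"
begin


lemma norm_nat_powr: "norm (of_nat m powr (s::complex)) = real m powr Re s"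
  by (subst norm_powr_real_powr) auto

lemma summable_nat2_powr: "p < -1 \<Longrightarrow> summable (\<lambda>n. real (n+2) powr p)"
proof -
  assume "p < -1"
  hence "summable (\<lambda>n. real n powr p)" by (simp add: summable_real_powr_iff)
  from summable_ignore_initial_segment[OF this, of 2] show ?thesis by simp
qed

definition Zs :: "complex \<Rightarrow> complex" where
  "Zs s = (\<Sum>n. of_nat (n+2) powr (-s))"

lemma Zs_abs_summable: "1 < Re s \<Longrightarrow> summable (\<lambda>n. norm (of_nat (n+2) powr (-s) :: complex))"
  unfolding norm_nat_powr by (rule summable_nat2_powr) simp

lemma Zs_sums: "1 < Re s \<Longrightarrow> (\<lambda>n. of_nat (n+2) powr (-s)) sums Zs s"
  unfolding Zs_def by (rule summable_sums, rule summable_norm_cancel, rule Zs_abs_summable)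



lemma infsum_nat_eq:
  fixes f :: "nat \<Rightarrow> 'a::banach"
  assumes "summable (\<lambda>n. norm (f n))"
  shows "infsum f UNIV = suminf f"
  by (rule infsumI[OF norm_summable_imp_has_sum[OF assms summable_sums[OF summable_norm_cancel[OF assms]]]])

lemma double_series_swap:
  fixes a :: "nat \<Rightarrow> nat \<Rightarrow> complex"
  assumes rows: "\<And>n. summable (\<lambda>j. norm (a n j))"
    and bnd: "summable (\<lambda>n. \<Sum>j. norm (a n j))"
  shows "(\<lambda>n. \<Sum>j. a n j) sums (\<Sum>j. \<Sum>n. a n j)"
proof -
  have rows': "infsum (\<lambda>j. norm (a n j)) UNIV = (\<Sum>j. norm (a n j))" for n
    by (rule infsum_nat_eq) (simp add: rows)
  have nn: "0 \<le> (\<Sum>j. norm (a n j))" for n by (rule suminf_nonneg[OF rows]) simp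
  have "(\<lambda>x. norm ((\<lambda>(n,j). a n j) x)) summable_on Sigma UNIV (\<lambda>_. UNIV)"
  proof (rule Infinite_Sum.abs_summable_on_Sigma_iff[THEN iffD2], intro conjI ballI)
    show "(\<lambda>y. norm ((\<lambda>(n, j). a n j) (x, y))) summable_on UNIV" for x
    proof -
      have "(\<lambda>y. norm (a x y)) summable_on UNIV"
        by (rule norm_summable_imp_summable_on) (simp add: rows)
      thus ?thesis by simp
    qed
    have "(\<lambda>n. (\<Sum>j. norm (a n j))) summable_on UNIV"
      by (rule norm_summable_imp_summable_on) (simp only: real_norm_def abs_of_nonneg[OF nn] bnd)
    thus "(\<lambda>x. norm (\<Sum>\<^sub>\<infinity>y\<in>UNIV. norm ((\<lambda>(n, j). a n j) (x, y)))) summable_on UNIV"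
      by (simp only: case_prod_conv rows' real_norm_def abs_of_nonneg[OF nn])
  qed
  hence S: "(\<lambda>(n,j). a n j) summable_on UNIV \<times> UNIV"
    by (subst summable_on_iff_abs_summable_on_complex) simp
  have cols: "summable (\<lambda>n. norm (a n j))" for j
  proof (rule summable_comparison_test[OF _ bnd], intro exI allI impI)
    fix n :: nat
    have "norm (a n j) = (\<Sum>i\<in>{j}. norm (a n i))" by simp
    also have "\<dots> \<le> (\<Sum>i. norm (a n i))"
      by (rule sum_le_suminf[OF rows]) simp_all
    finally show "norm (norm (a n j)) \<le> (\<Sum>i. norm (a n i))" by simp
  qed
  have g: "(\<lambda>n. infsum (\<lambda>j. a n j) UNIV) summable_on UNIV"
    using summable_on_Sigma_banach[of "\<lambda>n j. a n j" UNIV "\<lambda>_. UNIV"] S by simp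
  have S2: "(\<lambda>(j,n). a n j) summable_on UNIV \<times> UNIV"
  proof -
    have "(\<lambda>(x,y). (\<lambda>(n,j). a n j) (y,x)) summable_on UNIV \<times> UNIV"
      using S summable_on_swap[of "\<lambda>(n,j). a n j" UNIV UNIV] by blast
    thus ?thesis by (simp add: case_prod_unfold)
  qed
  have h: "(\<lambda>j. infsum (\<lambda>n. a n j) UNIV) summable_on UNIV"
    using summable_on_Sigma_banach[of "\<lambda>j n. a n j" UNIV "\<lambda>_. UNIV"] S2 by simp
  have eq1: "infsum (\<lambda>j. a n j) UNIV = (\<Sum>j. a n j)" for n by (rule infsum_nat_eq) (rule rows)
  have eq2: "infsum (\<lambda>n. a n j) UNIV = (\<Sum>n. a n j)" for j by (rule infsum_nat_eq) (rule cols)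
  have sw: "infsum (\<lambda>n. infsum (\<lambda>j. a n j) UNIV) UNIV = infsum (\<lambda>j. infsum (\<lambda>n. a n j) UNIV) UNIV"
    by (rule infsum_swap_banach) (use S in simp)
  have A: "(\<lambda>n. infsum (\<lambda>j. a n j) UNIV) sums infsum (\<lambda>n. infsum (\<lambda>j. a n j) UNIV) UNIV"
    by (rule has_sum_imp_sums, rule has_sum_infsum, rule g)
  have B: "(\<lambda>j. infsum (\<lambda>n. a n j) UNIV) sums infsum (\<lambda>j. infsum (\<lambda>n. a n j) UNIV) UNIV"
    by (rule has_sum_imp_sums, rule has_sum_infsum, rule h)
  have B': "(\<Sum>j. \<Sum>n. a n j) = infsum (\<lambda>j. infsum (\<lambda>n. a n j) UNIV) UNIV"
    using sums_unique[OF B] by (simp only: eq2)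
  have "(\<lambda>n. infsum (\<lambda>j. a n j) UNIV) sums (\<Sum>j. \<Sum>n. a n j)" using A unfolding sw B'[symmetric] .
  thus ?thesis unfolding eq1 .
qed



lemma poch_nonneg0: "0 \<le> (x::real) \<Longrightarrow> 0 \<le> pochhammer x n"
  by (simp add: pochhammer_prod prod_nonneg)

lemma poch_norm: "norm (pochhammer (s::complex) k) \<le> pochhammer (norm s) k"
proof (induction k)
  case (Suc k)
  have "norm (pochhammer s (Suc k)) = norm (pochhammer s k) * norm (s + of_nat k)"
    by (simp add: pochhammer_Suc norm_mult)
  also have "\<dots> \<le> pochhammer (norm s) k * (norm s + of_nat k)"
    by (intro mult_mono Suc.IH) (auto intro: norm_triangle_le poch_nonneg0)
  also have "\<dots> = pochhammer (norm s) (Suc k)" by (simp add: pochhammer_Suc)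
  finally show ?case .
qed simp

lemma binom_series_real:
  fixes x r :: real
  assumes "0 \<le> x" "x < 1"
  shows "(\<lambda>i. pochhammer r i / fact i * x^i) sums (1-x) powr (-r)"
proof -
  have "(\<lambda>i. ((-r) gchoose i) * (-x)^i) sums (1 + -x) powr (-r)"
    by (rule gen_binomial_real) (use assms in auto)
  moreover have "((-r) gchoose i) * (-x)^i = pochhammer r i / fact i * x^i" for i
  proof -
    have m: "(-1::real)^i * (-1)^i = 1" by (simp flip: power_mult_distrib)
    have "((-r) gchoose i) * (-x)^i = ((-1)^i * (-1)^i) * (pochhammer r i / fact i * x^i)"
      unfolding gbinomial_pochhammer power_minus[of x] by simp
    thus ?thesis unfolding m by simp
  qed
  ultimately show ?thesis by simp
qed



definition Tt :: "nat \<Rightarrow> complex \<Rightarrow> complex" where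
  "Tt n s = of_nat n powr (-s) - ((of_nat n + 1) powr (1 - s) - of_nat n powr (1 - s)) / (1 - s)"

definition bk :: "nat \<Rightarrow> complex \<Rightarrow> complex" where
  "bk j s = ((-s) gchoose (Suc j)) / of_nat (j+2)"

lemma bk_norm: "norm (bk j s) \<le> pochhammer (norm s) (Suc j) / fact (Suc j)"
proof -
  have n2: "norm (of_nat (j+2) :: complex) = real (j+2)" by (rule norm_of_nat)
  have n1: "cmod (1 + of_nat j) = 1 + real j" using norm_of_nat[of "Suc j", where 'a=complex] by simp
  have "norm (bk j s) = norm ((-1) ^ Suc j * pochhammer s (Suc j) / fact (Suc j)) / norm (of_nat (j+2) :: complex)"
    unfolding bk_def gbinomial_pochhammer norm_divide by simp
  also have "\<dots> = norm (pochhammer s (Suc j)) / fact (Suc j) / real (j+2)"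
    unfolding n2 by (simp add: norm_divide norm_mult norm_power norm_fact n1)
  also have "\<dots> \<le> norm (pochhammer s (Suc j)) / fact (Suc j)"
    by (rule order_trans[OF divide_left_mono[of 1 "real (j+2)"]]) auto
  also have "\<dots> \<le> pochhammer (norm s) (Suc j) / fact (Suc j)"
    by (intro divide_right_mono poch_norm) auto
  finally show ?thesis .
qed

lemma T_series:
  assumes n: "2 \<le> n" and s: "s \<noteq> 1"
  shows "(\<lambda>j. bk j s * of_nat n powr (-(s + of_nat j + 1))) sums (- Tt n s)"
proof -
  define x where "x = (of_nat n :: complex)"
  have s1: "1 - s \<noteq> 0" using s by auto
  have h1: "(\<lambda>j. ((1-s) gchoose j) * x powr (1 - s - of_nat j)) sums ((x+1) powr (1-s))"
    using gen_binomial_complex''[of 1 "real n" "1-s"] n by (simp add: x_def add.commute)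
  have h2: "(\<lambda>j. ((1-s) gchoose Suc j) * x powr (1 - s - of_nat (Suc j))) sums ((x+1) powr (1-s) - x powr (1-s))"
    using h1 by (subst sums_Suc_iff) simp
  have e1: "((1-s) gchoose Suc j) * x powr (1 - s - of_nat (Suc j)) / (1-s)
            = ((-s) gchoose j) / of_nat (Suc j) * x powr (1 - s - of_nat (Suc j))" for j
  proof -
    have "of_nat (Suc j) * ((1-s) gchoose Suc j) = (1-s) * ((1 - s - 1) gchoose j)"
      by (rule gbinomial_absorption)
    hence A: "((1-s) gchoose Suc j) = (1-s) * ((-s) gchoose j) / of_nat (Suc j)"
      by (subst eq_divide_eq) (auto simp: mult.commute simp del: of_nat_Suc)
    show ?thesis unfolding A using s1 by simp
  qed
  have h3: "(\<lambda>j. ((-s) gchoose j) / of_nat (Suc j) * x powr (1 - s - of_nat (Suc j)))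
             sums (((x+1) powr (1-s) - x powr (1-s)) / (1-s))"
    using sums_divide[OF h2, of "1-s"] unfolding e1 .
  have h4: "(\<lambda>j. ((-s) gchoose Suc j) / of_nat (Suc (Suc j)) * x powr (1 - s - of_nat (Suc (Suc j))))
             sums (((x+1) powr (1-s) - x powr (1-s)) / (1-s) - x powr (-s))"
    using h3 by (subst sums_Suc_iff) simp
  have e2: "((-s) gchoose Suc j) / of_nat (Suc (Suc j)) * x powr (1 - s - of_nat (Suc (Suc j)))
           = bk j s * x powr (-(s + of_nat j + 1))" for j
    unfolding bk_def by (simp add: algebra_simps)
  have e3: "((x+1) powr (1-s) - x powr (1-s)) / (1-s) - x powr (-s) = - Tt n s"
    unfolding Tt_def x_def by simp
  have "(\<lambda>j. bk j s * x powr (-(s + of_nat j + 1))) sums (- Tt n s)" using h4 unfolding e2 e3 .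
  thus ?thesis unfolding x_def .
qed




lemma pw_split:
  assumes "0 < (m::real)"
  shows "m powr (-(\<sigma> + real j + 1)) = m powr (-\<sigma>) * (1/m)^(Suc j)"
proof -
  have "m powr (-(\<sigma> + real j + 1)) = m powr (-\<sigma>) * m powr (- real (Suc j))"
    by (subst powr_add[symmetric]) (simp add: algebra_simps)
  also have "m powr (- real (Suc j)) = (1/m)^(Suc j)"
  proof -
    have "m powr real (Suc j) = m^(Suc j)" using assms by (rule powr_realpow)
    thus ?thesis by (simp only: powr_minus power_one_over inverse_eq_divide)
  qed
  finally show ?thesis .
qed

lemma row_bound:
  assumes m: "2 \<le> m"
  shows "summable (\<lambda>j. norm (bk j s) * real m powr (-(Re s + real j + 1)))"
    and "(\<Sum>j. norm (bk j s) * real m powr (-(Re s + real j + 1))) \<le> 2 powr (norm s) * real m powr (-Re s)"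
proof -
  define x where "x = 1 / real m"
  define P where "P i = pochhammer (norm s) i / fact i" for i
  have x: "0 \<le> x" "x \<le> 1/2" using m by (auto simp: x_def field_simps)
  have bs: "(\<lambda>i. P i * x^i) sums (1-x) powr (-norm s)"
    unfolding P_def by (rule binom_series_real) (use x in auto)
  have bs1: "(\<lambda>j. P (Suc j) * x^(Suc j)) sums ((1-x) powr (-norm s) - 1)"
    using bs by (subst sums_Suc_iff) (simp add: P_def)
  define u where "u j = real m powr (-Re s) * (P (Suc j) * x^(Suc j))" for j
  have us: "u sums (real m powr (-Re s) * ((1-x) powr (-norm s) - 1))"
    unfolding u_def by (rule sums_mult[OF bs1])
  have le: "norm (bk j s) * real m powr (-(Re s + real j + 1)) \<le> u j" for j
  proof -
    have "real m powr (-(Re s + real j + 1)) = real m powr (-Re s) * x^(Suc j)"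
      unfolding x_def by (rule pw_split) (use m in auto)
    moreover have "norm (bk j s) \<le> P (Suc j)" unfolding P_def by (rule bk_norm)
    moreover have "norm (bk j s) * (real m powr (-Re s) * x^(Suc j)) \<le> P (Suc j) * (real m powr (-Re s) * x^(Suc j))"
      by (rule mult_right_mono[OF \<open>norm (bk j s) \<le> P (Suc j)\<close>]) (use x in simp)
    ultimately show ?thesis unfolding u_def by (simp add: mult_ac)
  qed
  have nn: "0 \<le> norm (bk j s) * real m powr (-(Re s + real j + 1))" for j by simp
  show sm: "summable (\<lambda>j. norm (bk j s) * real m powr (-(Re s + real j + 1)))"
    by (rule summable_comparison_test[OF _ sums_summable[OF us]]) (use le nn in auto)
  have "(\<Sum>j. norm (bk j s) * real m powr (-(Re s + real j + 1))) \<le> (\<Sum>j. u j)"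
    by (rule suminf_le[OF le sm sums_summable[OF us]])
  also have "\<dots> = real m powr (-Re s) * ((1-x) powr (-norm s) - 1)" using us by (rule sums_unique[symmetric])
  also have "\<dots> \<le> real m powr (-Re s) * 2 powr (norm s)"
  proof (intro mult_left_mono)
    have "(1-x) powr (-norm s) \<le> (1/2) powr (-norm s)"
      by (rule powr_mono2') (use x in auto)
    also have "(1/2::real) powr (-norm s) = 2 powr (norm s)"
      by (simp add: powr_minus_divide powr_divide)
    finally show "(1-x) powr (-norm s) - 1 \<le> 2 powr (norm s)" by simp
  qed simp
  finally show "(\<Sum>j. norm (bk j s) * real m powr (-(Re s + real j + 1))) \<le> 2 powr (norm s) * real m powr (-Re s)"
    by (simp add: mult_ac)
qed

lemma KEY:
  assumes s: "1 < Re s"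
  shows "(\<lambda>n. Tt (n+2) s) sums (- (\<Sum>j. bk j s * Zs (s + of_nat j + 1)))"
proof -
  define a where "a n j = bk j s * of_nat (n+2) powr (-(s + of_nat j + 1))" for n j
  have s1: "s \<noteq> 1" using s by auto
  have na: "norm (a n j) = norm (bk j s) * real (n+2) powr (-(Re s + real j + 1))" for n j
    unfolding a_def norm_mult norm_nat_powr by simp
  have rows: "summable (\<lambda>j. norm (a n j))" for n
    unfolding na by (rule row_bound) simp
  have rowsum: "(\<Sum>j. a n j) = - Tt (n+2) s" for n
    using T_series[of "n+2" s] s1 unfolding a_def by (simp add: sums_iff)
  have colsum: "(\<Sum>n. a n j) = bk j s * Zs (s + of_nat j + 1)" for j
  proof -
    have "(\<lambda>n. of_nat (n+2) powr (-(s + of_nat j + 1))) sums Zs (s + of_nat j + 1)"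
      by (rule Zs_sums) (use s in simp)
    from sums_mult[OF this, of "bk j s"] show ?thesis unfolding a_def by (simp add: sums_iff)
  qed
  have bnd: "summable (\<lambda>n. \<Sum>j. norm (a n j))"
  proof (rule summable_comparison_test)
    show "summable (\<lambda>n. 2 powr (norm s) * real (n+2) powr (-Re s))"
      by (rule summable_mult, rule summable_nat2_powr) (use s in simp)
    show "\<exists>N. \<forall>n\<ge>N. norm (\<Sum>j. norm (a n j)) \<le> 2 powr (norm s) * real (n+2) powr (-Re s)"
    proof (intro exI allI impI)
      fix n :: nat
      have "0 \<le> (\<Sum>j. norm (a n j))" by (rule suminf_nonneg[OF rows]) simp
      moreover have "(\<Sum>j. norm (a n j)) \<le> 2 powr (norm s) * real (n+2) powr (-Re s)"
        unfolding na by (rule row_bound(2)) simp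
      ultimately show "norm (\<Sum>j. norm (a n j)) \<le> 2 powr (norm s) * real (n+2) powr (-Re s)" by simp
    qed
  qed
  have "(\<lambda>n. \<Sum>j. a n j) sums (\<Sum>j. \<Sum>n. a n j)"
    by (rule double_series_swap[OF rows bnd])
  hence "(\<lambda>n. - Tt (n+2) s) sums (\<Sum>j. bk j s * Zs (s + of_nat j + 1))"
    unfolding rowsum colsum .
  from sums_minus[OF this] show ?thesis by simp
qed

lemma TEL:
  assumes s: "1 < Re s"
  shows "(\<lambda>n. Tt (n+2) s) sums (Zs s - 2 powr (1-s) / (s-1))"
proof -
  have s1: "1 - s \<noteq> 0" using s by auto
  define f where "f n = of_nat (n+2) powr (1-s) / (1-s)" for n
  have lim0: "(\<lambda>n. of_nat n powr (1-s) :: complex) \<longlonglongrightarrow> 0"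
    by (rule tendsto_neg_powr_complex_of_nat[OF filterlim_ident]) (use s in simp)
  have "(\<lambda>n. of_nat (n+2) powr (1-s) :: complex) \<longlonglongrightarrow> 0"
    using LIMSEQ_ignore_initial_segment[OF lim0, of 2] by simp
  hence flim: "f \<longlonglongrightarrow> 0" unfolding f_def using tendsto_divide_zero by blast
  have tel: "(\<lambda>n. f (Suc n) - f n) sums (0 - f 0)" by (rule telescope_sums[OF flim])
  have "(\<lambda>n. of_nat (n+2) powr (-s) - (f (Suc n) - f n)) sums (Zs s - (0 - f 0))"
    by (rule sums_diff[OF Zs_sums[OF s] tel])
  moreover have "of_nat (n+2) powr (-s) - (f (Suc n) - f n) = Tt (n+2) s" for n
    unfolding f_def Tt_def by (simp add: diff_divide_distrib add_ac)
  moreover have "Zs s - (0 - f 0) = Zs s - 2 powr (1-s) / (s-1)"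
    unfolding f_def using s1 by (simp add: field_simps)
  ultimately show ?thesis by simp
qed


lemma norm_nat2_powr [simp]: "norm ((2 + of_nat n :: complex) powr s) = (2 + real n) powr Re s"
  using norm_nat_powr[of "n+2" s] by (simp add: add.commute)

lemma holo_series_ev:
  fixes f :: "nat \<Rightarrow> complex \<Rightarrow> complex"
  assumes S: "open S" and hol: "\<And>n. f n holomorphic_on S" and M: "summable M"
    and bnd: "\<forall>\<^sub>F n in sequentially. \<forall>x\<in>S. norm (f n x) \<le> M n"
  shows "(\<lambda>x. \<Sum>n. f n x) holomorphic_on S"
proof -
  have d: "\<And>n x. x \<in> S \<Longrightarrow> (f n has_field_derivative deriv (f n) x) (at x)"
    using hol S by (blast intro: holomorphic_derivI)
  obtain g g' where g: "\<forall>x\<in>S. ((\<lambda>n. f n x) sums g x) \<and> ((\<lambda>n. deriv (f n) x) sums g' x) \<and> (g has_field_derivative g' x) (at x)"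
    using series_and_derivative_comparison[OF S M d bnd] by metis
  have "g holomorphic_on S" using g S by (auto simp: holomorphic_on_open)
  moreover have "\<And>x. x \<in> S \<Longrightarrow> g x = (\<Sum>n. f n x)" using g sums_unique by blast
  ultimately show ?thesis by (rule holomorphic_transform)
qed

lemma holo_local:
  assumes S: "open S" and loc: "\<And>x. x \<in> S \<Longrightarrow> \<exists>T. open T \<and> x \<in> T \<and> T \<subseteq> S \<and> f holomorphic_on T"
  shows "f holomorphic_on S"
  unfolding holomorphic_on_open[OF S]
proof
  fix x assume "x \<in> S"
  then obtain T where T: "open T" "x \<in> T" "T \<subseteq> S" "f holomorphic_on T" using loc by blast
  thus "\<exists>f'. (f has_field_derivative f') (at x)" by (auto simp: holomorphic_on_open)
qed

lemma Zs_holo: "Zs holomorphic_on {s. 1 < Re s}"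
proof (rule holo_local)
  show "open {s. 1 < Re s}" by (rule open_halfspace_Re_gt)
  fix x assume x: "x \<in> {s. 1 < Re s}"
  define e where "e = (Re x - 1) / 2"
  have e: "0 < e" using x by (simp add: e_def)
  have "(\<lambda>s. \<Sum>n. of_nat (n+2) powr (-s)) holomorphic_on {s. 1 + e < Re s}"
  proof (rule holo_series_ev)
    show "open {s. 1 + e < Re s}" by (rule open_halfspace_Re_gt)
    show "(\<lambda>s. of_nat (n+2) powr (-s)) holomorphic_on {s. 1 + e < Re s}" for n
      by (intro holomorphic_intros)
    show "summable (\<lambda>n. real (n+2) powr (-(1+e)))" by (rule summable_nat2_powr) (use e in simp)
    show "\<forall>\<^sub>F n in sequentially. \<forall>s\<in>{s. 1 + e < Re s}. norm (of_nat (n+2) powr (-s) :: complex) \<le> real (n+2) powr (-(1+e))"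
      by (intro always_eventually allI ballI) (auto simp: norm_nat_powr intro!: powr_mono)
  qed
  moreover have "{s. 1 + e < Re s} \<subseteq> {s. 1 < Re s}" using e by auto
  moreover have "x \<in> {s. 1 + e < Re s}" using x by (auto simp: e_def field_simps)
  ultimately show "\<exists>T. open T \<and> x \<in> T \<and> T \<subseteq> {s. 1 < Re s} \<and> Zs holomorphic_on T"
    by (intro exI[of _ "{s. 1 + e < Re s}"]) (auto simp: Zs_def[abs_def] open_halfspace_Re_gt)
qed

definition CZ :: real where "CZ = (\<Sum>n. real (n+2) powr (-2))"

lemma Zs_bound:
  assumes s: "2 \<le> Re s"
  shows "norm (Zs s) \<le> 4 * CZ * 2 powr (-Re s)"
proof -
  have sm: "summable (\<lambda>n. norm (of_nat (n+2) powr (-s) :: complex))"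
    by (rule Zs_abs_summable) (use s in simp)
  have sm2: "summable (\<lambda>n. real (n+2) powr (-2))" by (rule summable_nat2_powr) simp
  have le: "norm (of_nat (n+2) powr (-s) :: complex) \<le> real (n+2) powr (-2) * 2 powr (2 - Re s)" for n
  proof -
    have "norm (of_nat (n+2) powr (-s) :: complex) = real (n+2) powr (-2) * real (n+2) powr (2 - Re s)"
      by (simp add: norm_nat_powr flip: powr_add)
    also have "real (n+2) powr (2 - Re s) \<le> 2 powr (2 - Re s)"
      by (rule powr_mono2') (use s in auto)
    finally show ?thesis by (simp add: mult_left_mono)
  qed
  have "norm (Zs s) \<le> (\<Sum>n. norm (of_nat (n+2) powr (-s) :: complex))"
    unfolding Zs_def by (rule summable_norm[OF sm])
  also have "\<dots> \<le> (\<Sum>n. real (n+2) powr (-2) * 2 powr (2 - Re s))"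
    by (rule suminf_le[OF le sm summable_mult2[OF sm2]])
  also have "\<dots> = CZ * 2 powr (2 - Re s)" unfolding CZ_def by (rule suminf_mult2[symmetric, OF sm2])
  also have "2 powr (2 - Re s) = 4 * 2 powr (- Re s)" by (simp add: powr_diff powr_minus field_simps)
  finally show ?thesis by (simp add: mult_ac)
qed

lemma CZ_nonneg: "0 \<le> CZ"
  unfolding CZ_def by (rule suminf_nonneg[OF summable_nat2_powr]) auto

definition q :: "nat \<Rightarrow> complex \<Rightarrow> complex" where
  "q k s = (-1)^(Suc k) * pochhammer s k / (fact (Suc k) * of_nat (k+2))"

lemma bk_q: "bk k s = q k s * (s + of_nat k)"
proof -
  have "bk k s = ((-1)^Suc k * (pochhammer s k * (s + of_nat k))) / (fact (Suc k) * of_nat (k+2))"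
    unfolding bk_def gbinomial_pochhammer minus_minus pochhammer_Suc divide_divide_eq_left ..
  also have "\<dots> = q k s * (s + of_nat k)"
    unfolding q_def by (simp only: times_divide_eq_left mult.assoc)
  finally show ?thesis .
qed

fun G :: "nat \<Rightarrow> complex \<Rightarrow> complex" where
  "G 0 s = (s - 1) * Zs s"
| "G (Suc m) s = 2 powr (1 - s) - (s - 1) * (\<Sum>k. q k s * G m (s + of_nat k + 1))"

lemma G1_eq:
  assumes s: "1 < Re s"
  shows "G (Suc 0) s = G 0 s"
proof -
  have s1: "s - 1 \<noteq> 0" using s by auto
  have "(\<Sum>n. Tt (n+2) s) = - (\<Sum>j. bk j s * Zs (s + of_nat j + 1))" using KEY[OF s] by (simp add: sums_iff)
  moreover have "(\<Sum>n. Tt (n+2) s) = Zs s - 2 powr (1-s) / (s-1)" using TEL[OF s] by (simp add: sums_iff)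
  ultimately have "- (\<Sum>j. bk j s * Zs (s + of_nat j + 1)) = Zs s - 2 powr (1-s) / (s-1)" by simp
  hence A: "(\<Sum>j. bk j s * Zs (s + of_nat j + 1)) = 2 powr (1-s) / (s-1) - Zs s"
    by (subst (asm) minus_equation_iff) simp
  have B: "q k s * G 0 (s + of_nat k + 1) = bk k s * Zs (s + of_nat k + 1)" for k
    by (simp add: bk_q)
  have C: "(\<Sum>k. q k s * G 0 (s + of_nat k + 1)) = (\<Sum>j. bk j s * Zs (s + of_nat j + 1))"
    by (rule arg_cong[where f=suminf], rule ext, rule B)
  have "G (Suc 0) s = 2 powr (1-s) - (s-1) * (\<Sum>k. q k s * G 0 (s + of_nat k + 1))"
    by (rule G.simps(2))
  also have "\<dots> = (s - 1) * Zs s" unfolding C A using s1 by (simp add: field_simps)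
  finally show ?thesis by simp
qed

lemma G_agree: "1 - real m < Re s \<Longrightarrow> G (Suc m) s = G m s"
proof (induction m arbitrary: s)
  case 0
  thus ?case using G1_eq by simp
next
  case (Suc m)
  have "G (Suc m) (s + of_nat k + 1) = G m (s + of_nat k + 1)" for k
    by (rule Suc.IH) (use Suc.prems in simp)
  thus ?case by (simp only: G.simps(2)[of "Suc m"]) simp
qed

lemma G_agree':
  assumes "m \<le> m'" "1 - real m < Re s"
  shows "G m' s = G m s"
  using assms(1)
proof (induction m' rule: dec_induct)
  case (step n)
  have "1 - real n < Re s" using step(1) assms(2) by linarith
  thus ?case using G_agree[of n s] step(3) by simp
qed simp

lemma G_eq0: "1 < Re s \<Longrightarrow> G m s = (s - 1) * Zs s"
  using G_agree'[of 0 m s] by simp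


lemma poch_mono: "0 \<le> (a::real) \<Longrightarrow> a \<le> b \<Longrightarrow> pochhammer a n \<le> pochhammer b n"
  unfolding pochhammer_prod by (intro prod_mono) auto

lemma q_holo: "q k holomorphic_on S"
  unfolding q_def by (intro holomorphic_intros) auto

lemma G_holo: "G m holomorphic_on {s. 1 - real m < Re s}"
proof (induction m)
  case 0
  have "(\<lambda>s. (s - 1) * Zs s) holomorphic_on {s. 1 < Re s}"
    by (intro holomorphic_intros Zs_holo)
  hence "G 0 holomorphic_on {s. 1 < Re s}" by (rule holomorphic_transform) simp
  moreover have "{s. 1 - real 0 < Re s} = {s. 1 < Re s}" by simp
  ultimately show ?case by (simp only:)
next
  case (Suc m)
  define H where "H = {s. - real m < Re s}"
  have Hopen: "open H" unfolding H_def by (rule open_halfspace_Re_gt)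
  define Ser where "Ser s = (\<Sum>k. q k s * G m (s + of_nat k + 1))" for s
  have "Ser holomorphic_on H"
  proof (rule holo_local[OF Hopen])
    fix x assume x: "x \<in> H"
    define \<delta> where "\<delta> = (Re x + real m) / 2"
    have \<delta>: "0 < \<delta>" using x by (simp add: \<delta>_def H_def)
    define R where "R = norm x + 1"
    define T where "T = {s. - real m + \<delta> < Re s} \<inter> ball 0 R"
    have Topen: "open T" unfolding T_def by (intro open_Int open_halfspace_Re_gt open_ball)
    have xT: "x \<in> T" unfolding T_def R_def using x by (auto simp: \<delta>_def H_def field_simps)
    have TH: "T \<subseteq> H" unfolding T_def H_def using \<delta> by auto
    define P where "P i = pochhammer R i / fact i" for i
    have R0: "0 \<le> R" by (simp add: R_def)
    have bs: "(\<lambda>i. P i * (1/2)^i) sums (1 - 1/2) powr (-R)"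
      unfolding P_def by (rule binom_series_real) auto
    have bs1: "summable (\<lambda>k. P (Suc k) * (1/2)^(Suc k))"
      using bs by (subst summable_Suc_iff) (rule sums_summable)
    have "(\<lambda>s. \<Sum>k. q k s * G m (s + of_nat k + 1)) holomorphic_on T"
    proof (rule holo_series_ev[OF Topen])
      fix k
      have "(G m \<circ> (\<lambda>s. s + of_nat k + 1)) holomorphic_on T"
      proof (rule holomorphic_on_compose_gen[OF _ Suc.IH])
        show "(\<lambda>s. s + of_nat k + 1) holomorphic_on T" by (intro holomorphic_intros)
        show "(\<lambda>s. s + of_nat k + 1) ` T \<subseteq> {s. 1 - real m < Re s}"
          using TH by (auto simp: H_def)
      qed
      thus "(\<lambda>s. q k s * G m (s + of_nat k + 1)) holomorphic_on T"
        by (intro holomorphic_intros q_holo) (simp add: o_def)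
    next
      show "summable (\<lambda>k. 4 * CZ * 2^m * (P (Suc k) * (1/2)^(Suc k)))"
        by (rule summable_mult[OF bs1])
    next
      show "\<forall>\<^sub>F k in sequentially. \<forall>s\<in>T. norm (q k s * G m (s + of_nat k + 1)) \<le> 4 * CZ * 2^m * (P (Suc k) * (1/2)^(Suc k))"
      proof (rule eventually_sequentiallyI[of "Suc m"], intro ballI)
        fix k s assume k: "Suc m \<le> k" and s: "s \<in> T"
        have Res: "- real m < Re s" using s TH by (auto simp: H_def)
        have ns: "norm s \<le> R" using s by (auto simp: T_def)
        have Re2: "2 \<le> Re (s + of_nat k + 1)" using Res k by simp
        have "q k s * G m (s + of_nat k + 1) = bk k s * Zs (s + of_nat k + 1)"
          using G_eq0[of "s + of_nat k + 1" m] Re2 by (simp add: bk_q)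
        hence "norm (q k s * G m (s + of_nat k + 1)) = norm (bk k s) * norm (Zs (s + of_nat k + 1))"
          by (simp add: norm_mult)
        also have "\<dots> \<le> P (Suc k) * (4 * CZ * 2 powr (-(Re s + real k + 1)))"
        proof (rule mult_mono)
          show "norm (bk k s) \<le> P (Suc k)"
            using bk_norm[of k s] poch_mono[OF norm_ge_zero ns, of "Suc k"]
            unfolding P_def by (meson divide_right_mono fact_ge_zero order_trans)
          show "norm (Zs (s + of_nat k + 1)) \<le> 4 * CZ * 2 powr (-(Re s + real k + 1))"
            using Zs_bound[OF Re2] by simp
          show "0 \<le> P (Suc k)" unfolding P_def by (simp add: poch_nonneg0 R0)
        qed simp
        finally have A: "norm (q k s * G m (s + of_nat k + 1)) \<le> P (Suc k) * (4 * CZ * 2 powr (-(Re s + real k + 1)))" .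
        have "2 powr (-(Re s + real k + 1)) \<le> 2 powr (-(- real m + real k + 1))"
          by (rule powr_mono) (use Res in auto)
        also have "(2::real) powr (-(- real m + real k + 1)) = 2^m * (1/2)^(Suc k)"
          by (subst pw_split) (simp_all add: powr_realpow)
        finally have B: "2 powr (-(Re s + real k + 1)) \<le> 2^m * (1/2)^(Suc k)" .
        have P0: "0 \<le> P (Suc k)" unfolding P_def by (simp add: poch_nonneg0 R0)
        have "P (Suc k) * (4 * CZ * 2 powr (-(Re s + real k + 1))) \<le> P (Suc k) * (4 * CZ * (2^m * (1/2)^(Suc k)))"
          by (intro mult_left_mono B P0) (use CZ_nonneg in simp_all)
        also have "\<dots> = 4 * CZ * 2^m * (P (Suc k) * (1/2)^(Suc k))" by (simp only: ac_simps)
        finally show "norm (q k s * G m (s + of_nat k + 1)) \<le> 4 * CZ * 2^m * (P (Suc k) * (1/2)^(Suc k))"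
          using A by linarith
      qed
    qed
    hence "Ser holomorphic_on T" by (simp add: Ser_def[abs_def])
    thus "\<exists>T. open T \<and> x \<in> T \<and> T \<subseteq> H \<and> Ser holomorphic_on T"
      using Topen xT TH by blast
  qed
  hence "(\<lambda>s. 2 powr (1 - s) - (s - 1) * Ser s) holomorphic_on H"
    by (intro holomorphic_intros)
  hence "G (Suc m) holomorphic_on H"
    by (rule holomorphic_transform) (simp add: Ser_def)
  moreover have "{s. 1 - real (Suc m) < Re s} = H" by (auto simp: H_def)
  ultimately show ?case by (simp only:)
qed

definition Mi :: "complex \<Rightarrow> nat" where "Mi s = nat \<lceil>1 - Re s\<rceil> + 1"

lemma Mi_in: "1 - real (Mi s) < Re s"
proof -
  have A: "1 - Re s \<le> of_int \<lceil>1 - Re s\<rceil>" by (rule le_of_int_ceiling)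
  have c: "\<lceil>1 - Re s\<rceil> \<le> int (nat \<lceil>1 - Re s\<rceil>)" by simp
  have B: "of_int \<lceil>1 - Re s\<rceil> \<le> real (nat \<lceil>1 - Re s\<rceil>)"
    using c of_int_le_iff[where 'a=real] of_int_of_nat_eq by metis
  have "real (Mi s) = real (nat \<lceil>1 - Re s\<rceil>) + 1" unfolding Mi_def by simp
  with A B show ?thesis by linarith
qed

definition Gfin :: "complex \<Rightarrow> complex" where "Gfin s = G (Mi s) s"

lemma Gfin_eq:
  assumes m: "1 - real m < Re s"
  shows "Gfin s = G m s"
proof (cases "m \<le> Mi s")
  case True
  show ?thesis unfolding Gfin_def by (rule G_agree'[OF True m])
next
  case False
  hence le: "Mi s \<le> m" by simp
  show ?thesis unfolding Gfin_def by (rule G_agree'[OF le Mi_in, symmetric])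
qed

lemma Gfin_holo: "Gfin holomorphic_on UNIV"
proof (rule holo_local)
  fix x :: complex
  let ?T = "{s. 1 - real (Mi x) < Re s}"
  have "G (Mi x) holomorphic_on ?T" by (rule G_holo)
  hence "Gfin holomorphic_on ?T" by (rule holomorphic_transform) (simp add: Gfin_eq)
  moreover have "open ?T" by (rule open_halfspace_Re_gt)
  moreover have "x \<in> ?T" using Mi_in by simp
  ultimately show "\<exists>T. open T \<and> x \<in> T \<and> T \<subseteq> UNIV \<and> Gfin holomorphic_on T" by blast
qed simp

definition zf :: "complex \<Rightarrow> complex" where "zf s = 1 + Gfin s / (s - 1)"

lemma zf_holo: "zf holomorphic_on (- {1})"
proof -
  have "Gfin holomorphic_on (- {1})" by (rule holomorphic_on_subset[OF Gfin_holo]) simp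
  hence "(\<lambda>s. 1 + Gfin s / (s - 1)) holomorphic_on (- {1})"
    by (intro holomorphic_intros) auto
  thus ?thesis unfolding zf_def[abs_def] .
qed

lemma zf_Zs: "1 < Re w \<Longrightarrow> zf w = 1 + Zs w"
proof -
  assume w: "1 < Re w"
  hence "Gfin w = (w - 1) * Zs w" using Gfin_eq[of 0 w] G_eq0[of w 0] by simp
  moreover have "w - 1 \<noteq> 0" using w by auto
  ultimately show ?thesis unfolding zf_def by simp
qed

lemma zf_dir: "1 < Re w \<Longrightarrow> zf w = (\<Sum>n. 1 / (of_nat (Suc n)) powr w)"
proof -
  assume w: "1 < Re w"
  have "(\<lambda>n. 1 / (of_nat (Suc (Suc n))) powr w) sums Zs w"
  proof -
    have "1 / (of_nat (Suc (Suc n)) :: complex) powr w = of_nat (n+2) powr (-w)" for n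
      by (simp add: powr_minus inverse_eq_divide)
    thus ?thesis using Zs_sums[OF w] by simp
  qed
  hence "(\<lambda>n. 1 / (of_nat (Suc n)) powr w) sums (Zs w + 1 / (of_nat (Suc 0)) powr w)"
    by (subst (asm) sums_Suc_iff)
  hence "(\<Sum>n. 1 / (of_nat (Suc n)) powr w) = 1 + Zs w" by (simp add: sums_iff)
  thus ?thesis using zf_Zs[OF w] by simp
qed

lemma zeta_eq:
  assumes s: "s \<noteq> 1"
  shows "riemann_zeta s = zf s"
  unfolding riemann_zeta_def
proof (rule the_equality)
  show "\<exists>f. f holomorphic_on - {1} \<and> (\<forall>w. 1 < Re w \<longrightarrow> f w = (\<Sum>n. 1 / of_nat (Suc n) powr w)) \<and> f s = zf s"
    using zf_holo zf_dir by blast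
next
  fix z assume "\<exists>f. f holomorphic_on - {1} \<and> (\<forall>w. 1 < Re w \<longrightarrow> f w = (\<Sum>n. 1 / of_nat (Suc n) powr w)) \<and> f s = z"
  then obtain f where f: "f holomorphic_on - {1}" "\<And>w. 1 < Re w \<Longrightarrow> f w = (\<Sum>n. 1 / of_nat (Suc n) powr w)" "f s = z"
    by blast
  have conn: "connected (- {1::complex})"
    by (rule path_connected_imp_connected, rule path_connected_punctured_universe) simp
  have "f s = zf s"
  proof (rule analytic_continuation_open[of "{w. 1 < Re w}" "- {1}" f zf])
    show "open {w. 1 < Re w}" by (rule open_halfspace_Re_gt)
    show "open (- {1::complex})" by auto
    show "{w. 1 < Re w} \<noteq> {}" by (auto intro: exI[of _ 2])
    show "{w. 1 < Re w} \<subseteq> - {1}" by auto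
    show "f z = zf z" if "z \<in> {w. 1 < Re w}" for z using that f(2) zf_dir by simp
  qed (use conn f(1) zf_holo s in auto)
  thus "z = zf s" using f(3) by simp
qed


lemma seg_bound:
  fixes f f' :: "complex \<Rightarrow> complex"
  assumes ab: "a \<le> b"
    and d: "\<And>u. a \<le> u \<Longrightarrow> u \<le> b \<Longrightarrow> (f has_field_derivative f' (of_real u)) (at (of_real u))"
    and bd: "\<And>u. a \<le> u \<Longrightarrow> u \<le> b \<Longrightarrow> norm (f' (of_real u)) \<le> B"
  shows "norm (f (of_real b) - f (of_real a)) \<le> B * (b - a)"
proof -
  let ?S = "of_real ` {a..b} :: complex set"
  have "norm (f (of_real b) - f (of_real a)) \<le> B * norm (of_real b - of_real a :: complex)"
  proof (rule field_differentiable_bound[where f' = f'])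
    show "convex ?S" by (rule convex_linear_image) auto
    show "(f has_field_derivative f' z) (at z within ?S)" if "z \<in> ?S" for z
      using that d by (auto intro: has_field_derivative_at_within)
    show "norm (f' z) \<le> B" if "z \<in> ?S" for z using that bd by auto
  qed (use ab in auto)
  also have "norm (of_real b - of_real a :: complex) = b - a"
    using ab by (simp flip: of_real_diff)
  finally show ?thesis .
qed

lemma ofreal_notnp: "0 < u \<Longrightarrow> (of_real u :: complex) \<notin> \<real>\<^sub>\<le>\<^sub>0"
  by (simp add: complex_nonpos_Reals_iff)

lemma norm_ofreal_powr: "0 \<le> u \<Longrightarrow> norm ((of_real u :: complex) powr z) = u powr Re z"
  by (subst norm_powr_real_powr) auto

lemma inner_bound:
  assumes x: "1 \<le> x" "x \<le> u" and s: "0 < Re s"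
  shows "norm (of_real x powr (-s) - of_real u powr (-s) :: complex) \<le> norm s * x powr (-Re s - 1) * (u - x)"
proof -
  have "norm ((\<lambda>w. w powr (-s)) (of_real u) - (\<lambda>w. w powr (-s)) (of_real x)) \<le> (norm s * x powr (-Re s - 1)) * (u - x)"
  proof (rule seg_bound[where f' = "\<lambda>w. (-s) * w powr (-s - 1)"])
    fix v assume v: "x \<le> v" "v \<le> u"
    show "((\<lambda>w. w powr (-s)) has_field_derivative (-s) * of_real v powr (-s - 1)) (at (of_real v))"
      by (rule has_field_derivative_powr) (rule ofreal_notnp, use x v in auto)
    have "norm ((-s) * of_real v powr (-s - 1)) = norm s * v powr (-Re s - 1)"
      using x v by (simp add: norm_mult norm_ofreal_powr)
    also have "\<dots> \<le> norm s * x powr (-Re s - 1)"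
      by (intro mult_left_mono powr_mono2') (use x v s in auto)
    finally show "norm ((-s) * of_real v powr (-s - 1)) \<le> norm s * x powr (-Re s - 1)" .
  qed (use x in auto)
  thus ?thesis by (simp add: norm_minus_commute)
qed

lemma TB:
  assumes n: "1 \<le> n" and s: "0 < Re s" "s \<noteq> 1"
  shows "norm (Tt n s) \<le> norm s * real n powr (-Re s - 1)"
proof -
  have s1: "1 - s \<noteq> 0" using s by auto
  define c where "c = (of_nat n :: complex) powr (-s)"
  define g where "g z = c * (z - of_nat n) - (z powr (1-s) - of_nat n powr (1-s)) / (1-s)" for z
  have "norm (g (of_real (real n + 1)) - g (of_real (real n))) \<le> (norm s * real n powr (-Re s - 1)) * ((real n + 1) - real n)"
  proof (rule seg_bound[where f' = "\<lambda>z. c - z powr (-s)"])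
    fix u assume u: "real n \<le> u" "u \<le> real n + 1"
    have u0: "0 < u" using u n by auto
    have d1: "((\<lambda>z. z powr (1-s)) has_field_derivative ((1-s) * of_real u powr (1 - s - 1))) (at (of_real u))"
      by (rule has_field_derivative_powr) (rule ofreal_notnp[OF u0])
    have d2: "((\<lambda>z. z - of_nat n) has_field_derivative 1) (at (of_real u))"
      by (auto intro!: derivative_eq_intros)
    have "(g has_field_derivative (c * 1 - ((1-s) * of_real u powr (1 - s - 1) - 0) / (1-s))) (at (of_real u))"
      unfolding g_def[abs_def]
      by (rule DERIV_diff[OF DERIV_cmult[OF d2] DERIV_cdivide[OF DERIV_diff[OF d1 DERIV_const]]])
    moreover have "c * 1 - ((1-s) * of_real u powr (1 - s - 1) - 0) / (1-s) = c - of_real u powr (-s)"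
      using s1 by simp
    ultimately show "(g has_field_derivative (c - of_real u powr (-s))) (at (of_real u))" by simp
    have "norm (c - of_real u powr (-s)) \<le> norm s * real n powr (-Re s - 1) * (u - real n)"
      unfolding c_def using inner_bound[of "real n" u s] u n s by simp
    also have "\<dots> \<le> norm s * real n powr (-Re s - 1) * 1"
      by (intro mult_left_mono) (use u in auto)
    finally show "norm (c - of_real u powr (-s)) \<le> norm s * real n powr (-Re s - 1)" by simp
  qed simp
  moreover have "g (of_real (real n + 1)) - g (of_real (real n)) = Tt n s"
    unfolding g_def Tt_def c_def by simp
  ultimately show ?thesis by simp
qed

definition F1 :: "complex \<Rightarrow> complex" where
  "F1 s = 1 + 2 powr (1 - s) / (s - 1) + (\<Sum>n. Tt (n+2) s)"

definition D0 :: "complex set" where "D0 = {s. 0 < Re s} - {1}"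

lemma D0_open: "open D0"
  unfolding D0_def by (intro open_Diff open_halfspace_Re_gt) auto

lemma Tt_holo: "Tt n holomorphic_on D0"
  unfolding Tt_def[abs_def] D0_def by (intro holomorphic_intros) auto

lemma F1_holo: "F1 holomorphic_on D0"
proof -
  have "(\<lambda>s. \<Sum>n. Tt (n+2) s) holomorphic_on D0"
  proof (rule holo_local[OF D0_open])
    fix x assume x: "x \<in> D0"
    define R where "R = norm x + 1"
    define T where "T = ({s. Re x / 2 < Re s} \<inter> ball 0 R) - {1}"
    have x0: "0 < Re x" using x by (simp add: D0_def)
    have Topen: "open T" unfolding T_def by (intro open_Diff open_Int open_halfspace_Re_gt open_ball) auto
    have xT: "x \<in> T" using x x0 by (auto simp: T_def R_def D0_def)
    have TD: "T \<subseteq> D0" using x0 by (auto simp: T_def D0_def)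
    have "(\<lambda>s. \<Sum>n. Tt (n+2) s) holomorphic_on T"
    proof (rule holo_series_ev[OF Topen])
      show "Tt (n+2) holomorphic_on T" for n by (rule holomorphic_on_subset[OF Tt_holo TD])
      show "summable (\<lambda>n. R * real (n+2) powr (-(Re x / 2) - 1))"
        by (intro summable_mult summable_nat2_powr) (use x0 in simp)
      show "\<forall>\<^sub>F n in sequentially. \<forall>s\<in>T. norm (Tt (n+2) s) \<le> R * real (n+2) powr (-(Re x / 2) - 1)"
      proof (intro always_eventually allI ballI)
        fix n s assume s: "s \<in> T"
        have sR: "norm s \<le> R" and sx: "Re x / 2 < Re s" and s1: "s \<noteq> 1" using s by (auto simp: T_def)
        have "norm (Tt (n+2) s) \<le> norm s * real (n+2) powr (-Re s - 1)"
          by (rule TB) (use sx x0 s1 in auto)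
        also have "\<dots> \<le> R * real (n+2) powr (-(Re x / 2) - 1)"
          by (intro mult_mono powr_mono) (use sR sx order_trans[OF norm_ge_zero sR] in auto)
        finally show "norm (Tt (n+2) s) \<le> R * real (n+2) powr (-(Re x / 2) - 1)" .
      qed
    qed
    thus "\<exists>T. open T \<and> x \<in> T \<and> T \<subseteq> D0 \<and> (\<lambda>s. \<Sum>n. Tt (n+2) s) holomorphic_on T"
      using Topen xT TD by blast
  qed
  hence "(\<lambda>s. 1 + 2 powr (1 - s) / (s - 1) + (\<Sum>n. Tt (n+2) s)) holomorphic_on D0"
    by (intro holomorphic_intros) (auto simp: D0_def)
  thus ?thesis unfolding F1_def[abs_def] .
qed

lemma D0_connected: "connected D0"
proof -
  have "aff_dim {s::complex. 0 < Re s} = int DIM(complex)"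
    by (rule aff_dim_open) (auto intro: open_halfspace_Re_gt exI[of _ 1])
  hence "aff_dim {s::complex. 0 < Re s} \<noteq> 1" by simp
  thus ?thesis unfolding D0_def by (intro connected_punctured_convex convex_halfspace_Re_gt)
qed

lemma zeta_F1:
  assumes s: "s \<in> D0"
  shows "riemann_zeta s = F1 s"
proof -
  have "zf s = F1 s"
  proof (rule analytic_continuation_open[of "{w. 1 < Re w}" D0 zf F1])
    show "open {w. 1 < Re w}" by (rule open_halfspace_Re_gt)
    show "{w. 1 < Re w} \<noteq> {}" by (auto intro: exI[of _ 2])
    show "{w. 1 < Re w} \<subseteq> D0" by (auto simp: D0_def)
    show "zf holomorphic_on D0" by (rule holomorphic_on_subset[OF zf_holo]) (auto simp: D0_def)
    show "zf z = F1 z" if "z \<in> {w. 1 < Re w}" for z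
    proof -
      have z: "1 < Re z" using that by simp
      have "(\<Sum>n. Tt (n+2) z) = Zs z - 2 powr (1-z) / (z-1)" using TEL[OF z] by (simp add: sums_iff)
      thus ?thesis unfolding F1_def zf_Zs[OF z] by simp
    qed
  qed (use D0_open D0_connected F1_holo s in auto)
  moreover have "s \<noteq> 1" using s by (simp add: D0_def)
  ultimately show ?thesis using zeta_eq by simp
qed


definition C3 :: real where "C3 = (\<Sum>n. real (n+2) powr (-3/2))"

lemma C3_nonneg: "0 \<le> C3"
  unfolding C3_def by (rule suminf_nonneg[OF summable_nat2_powr]) auto

lemma sqrt2_le: "2 powr (1/2) \<le> (3/2::real)"
proof -
  have "2 powr (1/2) = sqrt (2::real)" by (simp add: powr_half_sqrt)
  also have "sqrt 2 \<le> sqrt ((3/2)^2)" by (rule real_sqrt_le_mono) (simp add: power2_eq_square)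
  also have "\<dots> = 3/2" by simp
  finally show ?thesis .
qed

lemma zb1:
  assumes s: "1/2 \<le> Re s" "1/4 \<le> norm (s - 1)"
  shows "norm (zf s - 1) \<le> 6 + C3 * norm s"
proof -
  have s1: "s \<noteq> 1" using s by auto
  have sD: "s \<in> D0" using s s1 by (auto simp: D0_def)
  have "zf s = F1 s" using zeta_F1[OF sD] zeta_eq[OF s1] by simp
  hence eq: "zf s - 1 = 2 powr (1 - s) / (s - 1) + (\<Sum>n. Tt (n+2) s)" unfolding F1_def by simp
  have n2: "norm ((2::complex) powr (1 - s)) = 2 powr (1 - Re s)"
    using norm_powr_real_powr[of 2 "1 - s"] by simp
  have "norm (2 powr (1 - s) / (s - 1)) = 2 powr (1 - Re s) / norm (s - 1)"
    by (simp add: norm_divide n2)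
  also have "\<dots> \<le> 2 powr (1/2) / (1/4)"
    by (intro frac_le powr_mono) (use s in auto)
  also have "\<dots> \<le> 6" using sqrt2_le by simp
  finally have A: "norm (2 powr (1 - s) / (s - 1)) \<le> 6" .
  have le: "norm (Tt (n+2) s) \<le> norm s * real (n+2) powr (-3/2)" for n
  proof -
    have "norm (Tt (n+2) s) \<le> norm s * real (n+2) powr (-Re s - 1)"
      by (rule TB) (use s s1 in auto)
    also have "\<dots> \<le> norm s * real (n+2) powr (-3/2)"
      by (intro mult_left_mono powr_mono) (use s in auto)
    finally show ?thesis .
  qed
  have sm: "summable (\<lambda>n. norm s * real (n+2) powr (-3/2))"
    by (intro summable_mult summable_nat2_powr) simp
  have smn: "summable (\<lambda>n. norm (Tt (n+2) s))"
    by (rule summable_comparison_test[OF _ sm]) (use le in auto)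
  have "norm (\<Sum>n. Tt (n+2) s) \<le> (\<Sum>n. norm (Tt (n+2) s))" by (rule summable_norm[OF smn])
  also have "\<dots> \<le> (\<Sum>n. norm s * real (n+2) powr (-3/2))" by (rule suminf_le[OF le smn sm])
  also have "\<dots> = norm s * C3" unfolding C3_def by (rule suminf_mult) (rule summable_nat2_powr, simp)
  finally have B: "norm (\<Sum>n. Tt (n+2) s) \<le> C3 * norm s" by (simp add: mult_ac)
  show ?thesis unfolding eq using A B norm_triangle_ineq[of "2 powr (1 - s) / (s - 1)" "\<Sum>n. Tt (n+2) s"]
    by linarith
qed

lemma zb2:
  assumes s: "2 \<le> Re s"
  shows "norm (zf s - 1) \<le> 4 * CZ * 2 powr (-Re s)"
  using zf_Zs[of s] Zs_bound[OF s] s by simp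

definition KK :: real where "KK = 3 * (6 + 2 * C3) + 4 * CZ"

lemma ray_bound:
  assumes r: "0 \<le> r"
  shows "norm (zf (1/2 + of_real r + \<i> * of_real r) - 1) \<le> KK * (1 + r) * 2 powr (-r)"
proof -
  define s where "s = 1/2 + of_real r + \<i> * of_real r"
  have Res: "Re s = 1/2 + r" and Ims: "Im s = r" by (simp_all add: s_def)
  have p: "0 < (2::real) powr (-r)" by simp
  show ?thesis
  proof (cases "r \<le> 3/2")
    case True
    have ns: "norm s \<le> 1/2 + 2 * r"
    proof -
      have "norm s \<le> norm (1/2 + of_real r :: complex) + norm (\<i> * of_real r)"
        unfolding s_def by (rule norm_triangle_ineq)
      also have "norm (1/2 + of_real r :: complex) = 1/2 + r"
      proof -
        have "(1/2 + of_real r :: complex) = of_real (1/2 + r)" by simp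
        thus ?thesis using r by (simp only: norm_of_real abs_of_nonneg)
      qed
      finally show ?thesis using r by (simp add: norm_mult)
    qed
    have d: "1/4 \<le> norm (s - 1)"
    proof -
      have e: "(Re (s - 1))^2 + (Im (s - 1))^2 = 2 * (r - 1/4)^2 + 1/8"
        by (simp add: Res Ims power2_eq_square algebra_simps)
      have "(1/4::real)^2 \<le> 2 * (r - 1/4)^2 + 1/8" by (simp add: power2_eq_square)
      hence "(1/4)^2 \<le> (Re (s - 1))^2 + (Im (s - 1))^2" unfolding e .
      also have "\<dots> = (norm (s - 1))^2" by (simp add: cmod_power2)
      finally show ?thesis by (metis power2_le_imp_le norm_ge_zero)
    qed
    have "norm (zf s - 1) \<le> 6 + C3 * norm s" by (rule zb1) (use Res r d in auto)
    also have "\<dots> \<le> 6 + C3 * (1/2 + 2 * r)" by (intro add_left_mono mult_left_mono ns C3_nonneg)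
    also have "\<dots> \<le> (6 + 2 * C3) * (1 + r)" using C3_nonneg r by (simp add: algebra_simps)
    also have "\<dots> \<le> (6 + 2 * C3) * (1 + r) * (3 * 2 powr (-r))"
    proof -
      have "2 powr r \<le> 2 powr (3/2)" by (rule powr_mono) (use True in auto)
      also have "(2::real) powr (3/2) = 2 * 2 powr (1/2)"
        using powr_add[of "2::real" 1 "1/2"] by simp
      also have "\<dots> \<le> 3" using sqrt2_le by simp
      finally have "1 \<le> 3 * 2 powr (-r)" by (simp add: powr_minus field_simps)
      from mult_left_mono[OF this, of "(6 + 2 * C3) * (1 + r)"] show ?thesis using C3_nonneg r by simp
    qed
    also have "\<dots> \<le> KK * (1 + r) * 2 powr (-r)"
    proof -
      have "(6 + 2 * C3) * 3 \<le> KK" unfolding KK_def using CZ_nonneg by simp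
      hence "(6 + 2 * C3) * 3 * ((1 + r) * 2 powr (-r)) \<le> KK * ((1 + r) * 2 powr (-r))"
        by (rule mult_right_mono) (use r p in simp)
      thus ?thesis by (simp add: algebra_simps)
    qed
    finally show ?thesis unfolding s_def .
  next
    case False
    have "norm (zf s - 1) \<le> 4 * CZ * 2 powr (-Re s)" by (rule zb2) (use False Res in auto)
    also have "2 powr (-Re s) \<le> 2 powr (-r)" unfolding Res by (rule powr_mono) auto
    hence "4 * CZ * 2 powr (-Re s) \<le> 4 * CZ * 2 powr (-r)" using CZ_nonneg by (intro mult_left_mono) auto
    also have "\<dots> \<le> KK * (1 + r) * 2 powr (-r)"
    proof -
      have KK0: "0 \<le> KK" unfolding KK_def using C3_nonneg CZ_nonneg by simp
      have "4 * CZ \<le> KK" unfolding KK_def using C3_nonneg by simp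
      also have "KK * 1 \<le> KK * (1 + r)" by (rule mult_left_mono) (use r KK0 in auto)
      finally have "4 * CZ \<le> KK * (1 + r)" by simp
      thus ?thesis using p by (intro mult_right_mono) auto
    qed
    finally show ?thesis unfolding s_def by simp
  qed
qed


definition cc :: real where "cc = 1 + ln 2"
definition ww :: complex where "ww = (1 - \<i>) / of_real cc"
definition hh :: "real \<Rightarrow> complex \<Rightarrow> complex" where
  "hh t z = (zf (1/2 + \<i> * z) - 1) * (z powr of_real (t - 1) * exp (- z))"
definition QQ :: "complex set" where "QQ = {z. 0 \<le> Re z \<and> Im z \<le> 0 \<and> 0 \<le> Re z + Im z}"

lemma cc_ge: "1 \<le> cc" and cc_le: "cc \<le> 2" and cc_pos: "0 < cc"
  using ln_2_less_1 ln2_ge_two_thirds unfolding cc_def by auto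

lemma Re_ww: "Re ww = 1 / cc" and Im_ww: "Im ww = - 1 / cc"
  unfolding ww_def using cc_pos by (simp_all add: Re_divide Im_divide power2_eq_square)

lemma QQ_convex: "convex QQ"
proof -
  have "QQ = {z. Re z \<ge> 0} \<inter> {z. Im z \<le> 0} \<inter> {z. inner (1 + \<i>) z \<ge> 0}"
    unfolding QQ_def by (auto simp: inner_add_left)
  moreover have "convex ({z. Re z \<ge> 0} \<inter> {z. Im z \<le> 0} \<inter> {z. inner (1 + \<i>) z \<ge> (0::real)})"
    by (intro convex_Int convex_halfspace_Re_ge convex_halfspace_Im_le convex_halfspace_ge)
  ultimately show ?thesis by simp
qed

lemma QQ_not1: "z \<in> QQ \<Longrightarrow> 1/2 + \<i> * z \<noteq> 1"
proof
  assume z: "z \<in> QQ" and e: "1/2 + \<i> * z = 1"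
  have "Re (1/2 + \<i> * z) = Re 1" "Im (1/2 + \<i> * z) = Im 1" using e by simp_all
  hence "Im z = - 1/2" "Re z = 0" by simp_all
  thus False using z by (simp add: QQ_def)
qed

lemma QQ_pos: "z \<in> QQ \<Longrightarrow> z \<noteq> 0 \<Longrightarrow> 0 < Re z"
proof (rule ccontr)
  assume z: "z \<in> QQ" "z \<noteq> 0" "\<not> 0 < Re z"
  hence "Re z = 0" "Im z = 0" by (auto simp: QQ_def)
  hence "z = 0" by (simp add: complex_eq_iff)
  thus False using z by simp
qed

lemma shift_not1: "0 < Re z \<Longrightarrow> 1/2 + \<i> * z \<noteq> 1"
proof
  assume z: "0 < Re z" and e: "1/2 + \<i> * z = 1"
  have "Im (1/2 + \<i> * z) = Im 1" using e by simp
  thus False using z by simp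
qed

lemma hh_cont: assumes t: "1 < t" shows "continuous_on QQ (hh t)"
proof -
  have c1: "continuous_on QQ (\<lambda>z. zf (1/2 + \<i> * z))"
    by (rule continuous_on_compose2[OF holomorphic_on_imp_continuous_on[OF zf_holo]])
       (auto intro!: continuous_intros dest: QQ_not1)
  have c2: "continuous_on QQ (\<lambda>z. z powr of_real (t - 1))"
    by (rule continuous_on_powr_complex) (use t in \<open>auto simp: QQ_def intro!: continuous_intros\<close>)
  show ?thesis unfolding hh_def[abs_def]
    by (intro continuous_intros c1 c2)
qed

lemma hh_holo: "hh t holomorphic_on {z. 0 < Re z}"
proof -
  have h1: "(\<lambda>z. zf (1/2 + \<i> * z)) holomorphic_on {z. 0 < Re z}"
  proof -
    have "(zf \<circ> (\<lambda>z. 1/2 + \<i> * z)) holomorphic_on {z. 0 < Re z}"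
      by (rule holomorphic_on_compose_gen[OF _ zf_holo]) (auto intro!: holomorphic_intros dest: shift_not1)
    thus ?thesis by (simp add: o_def)
  qed
  have h2: "(\<lambda>z. z powr of_real (t - 1)) holomorphic_on {z. 0 < Re z}"
    by (rule holomorphic_on_powr) (auto intro!: holomorphic_intros simp: complex_nonpos_Reals_iff)
  show ?thesis unfolding hh_def[abs_def] by (intro holomorphic_intros h1 h2)
qed

lemma norm_ww: "norm ww \<le> 1"
proof -
  have "norm ww = norm (1 - \<i>) / cc" unfolding ww_def using cc_pos by (simp add: norm_divide)
  also have "norm (1 - \<i>) = sqrt 2" by (simp add: cmod_def)
  also have "sqrt 2 / cc \<le> 1" using sqrt2_le cc_ge ln2_ge_two_thirds
    by (simp add: powr_half_sqrt cc_def divide_le_eq)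
  finally show ?thesis .
qed

lemma contour_main:
  assumes t: "1 < t" and R: "1 \<le> R"
  shows "((\<lambda>x. hh t (of_real x)) has_integral integral {0..R} (\<lambda>x. hh t (of_real x))) {0..R}"
    and "((\<lambda>x. hh t (ww * of_real x) * ww) has_integral integral {0..R} (\<lambda>x. hh t (ww * of_real x) * ww)) {0..R}"
    and "norm (integral {0..R} (\<lambda>x. hh t (of_real x)) - integral {0..R} (\<lambda>x. hh t (ww * of_real x) * ww))
           \<le> 2 * R * ((6 + C3 * (1/2 + R)) * R powr (t - 1) * exp (- R / cc))"
proof -
  define a where "a = (0::complex)"
  define b where "b = (of_real R :: complex)"
  define c where "c = of_real R * ww"
  have aQ: "a \<in> QQ" by (simp add: a_def QQ_def)
  have bQ: "b \<in> QQ" using R by (simp add: b_def QQ_def)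
  have cQ: "c \<in> QQ" using R cc_pos by (simp add: c_def QQ_def Re_ww Im_ww)
  have hull: "convex hull {a, b, c} \<subseteq> QQ"
    by (rule hull_minimal) (use aQ bQ cQ QQ_convex in auto)
  have cont: "continuous_on QQ (hh t)" by (rule hh_cont[OF t])
  have C: "(hh t has_contour_integral 0) (linepath a b +++ linepath b c +++ linepath c a)"
  proof (rule Cauchy_theorem_triangle_cofinite[of _ _ _ _ "{0}"])
    show "continuous_on (convex hull {a, b, c}) (hh t)" by (rule continuous_on_subset[OF cont hull])
    fix x assume x: "x \<in> interior (convex hull {a, b, c}) - {0}"
    hence "x \<in> QQ" "x \<noteq> 0" using hull interior_subset by blast+
    hence "0 < Re x" by (rule QQ_pos)
    thus "hh t field_differentiable at x"
      by (intro holomorphic_on_imp_differentiable_at[OF hh_holo open_halfspace_Re_gt]) auto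
  qed auto
  have seg: "p \<in> QQ \<Longrightarrow> q \<in> QQ \<Longrightarrow> hh t contour_integrable_on linepath p q" for p q
    by (rule contour_integrable_continuous_linepath, rule continuous_on_subset[OF cont],
        rule closed_segment_subset) (auto intro: QQ_convex)
  define I1 where "I1 = contour_integral (linepath a b) (hh t)"
  define I2 where "I2 = contour_integral (linepath b c) (hh t)"
  define I3 where "I3 = contour_integral (linepath c a) (hh t)"
  have H1: "(hh t has_contour_integral I1) (linepath a b)" unfolding I1_def
    by (rule has_contour_integral_integral, rule seg[OF aQ bQ])
  have H2: "(hh t has_contour_integral I2) (linepath b c)" unfolding I2_def
    by (rule has_contour_integral_integral, rule seg[OF bQ cQ])
  have H3: "(hh t has_contour_integral I3) (linepath c a)" unfolding I3_def
    by (rule has_contour_integral_integral, rule seg[OF cQ aQ])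
  have "(hh t has_contour_integral (I1 + (I2 + I3))) (linepath a b +++ (linepath b c +++ linepath c a))"
    by (intro has_contour_integral_join H1 H2 H3 valid_path_linepath valid_path_join) auto
  hence sum0: "I1 + (I2 + I3) = 0" using C has_contour_integral_unique by blast
  have G1: "((\<lambda>x. hh t (of_real x)) has_integral I1) {0..R}"
    using H1 has_contour_integral_linepath_Reals_iff[of a b "hh t" I1] R by (simp add: a_def b_def)
  have "(hh t has_contour_integral (- I3)) (linepath a c)"
    using has_contour_integral_reversepath[OF valid_path_linepath H3] by simp
  hence "((\<lambda>x. hh t (linepath a c x) * (c - a)) has_integral (- I3)) {0..1}"
    by (simp add: has_contour_integral_linepath)
  moreover have "hh t (linepath a c x) * (c - a) = (\<lambda>z. hh t (ww * z) * ww) (linepath a b x) * (b - a)" for x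
    by (simp add: a_def b_def c_def linepath_def scaleR_conv_of_real mult_ac)
  ultimately have "((\<lambda>z. hh t (ww * z) * ww) has_contour_integral (- I3)) (linepath a b)"
    by (simp add: has_contour_integral_linepath)
  hence G2: "((\<lambda>x. hh t (ww * of_real x) * ww) has_integral (- I3)) {0..R}"
    using has_contour_integral_linepath_Reals_iff[of a b "\<lambda>z. hh t (ww * z) * ww" "- I3"] R
    by (simp add: a_def b_def)
  show "((\<lambda>x. hh t (of_real x)) has_integral integral {0..R} (\<lambda>x. hh t (of_real x))) {0..R}"
    by (subst integral_unique[OF G1]) (rule G1)
  show "((\<lambda>x. hh t (ww * of_real x) * ww) has_integral integral {0..R} (\<lambda>x. hh t (ww * of_real x) * ww)) {0..R}"
    by (subst integral_unique[OF G2]) (rule G2)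
  define B where "B = (6 + C3 * (1/2 + R)) * R powr (t - 1) * exp (- R / cc)"
  have B0: "0 \<le> B" unfolding B_def using C3_nonneg R by simp
  have bnd: "norm (hh t z) \<le> B" if z: "z \<in> closed_segment b c" for z
  proof -
    have S1: "closed_segment b c \<subseteq> {z. R / cc \<le> Re z}"
      by (rule closed_segment_subset[OF _ _ convex_halfspace_Re_ge]) (use R cc_ge cc_pos in \<open>auto simp: b_def c_def Re_ww divide_le_eq\<close>)
    have S2: "closed_segment b c \<subseteq> {z. Im z \<le> 0}"
      by (rule closed_segment_subset[OF _ _ convex_halfspace_Im_le]) (use R cc_pos in \<open>auto simp: b_def c_def Im_ww\<close>)
    have S3: "closed_segment b c \<subseteq> cball 0 R"
      by (rule closed_segment_subset[OF _ _ convex_cball]) (use R norm_ww in \<open>auto simp: b_def c_def norm_mult mult_left_le\<close>)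
    have Rez: "R / cc \<le> Re z" and Imz: "Im z \<le> 0" and nz: "norm z \<le> R" using z S1 S2 S3 by auto
    have z0: "0 < Re z" using Rez R cc_pos by (smt (verit) divide_pos_pos)
    define s where "s = 1/2 + \<i> * z"
    have Res: "1/2 \<le> Re s" using Imz by (simp add: s_def)
    have "1/4 \<le> R / cc" using R cc_le cc_pos by (simp add: divide_simps)
    also have "R / cc \<le> \<bar>Im (s - 1)\<bar>" using Rez z0 by (simp add: s_def)
    also have "\<bar>Im (s - 1)\<bar> \<le> norm (s - 1)" by (rule abs_Im_le_cmod)
    finally have d: "1/4 \<le> norm (s - 1)" .
    have ns: "norm s \<le> 1/2 + R"
      using norm_triangle_ineq[of "1/2" "\<i> * z"] nz by (simp add: s_def norm_mult)
    have P1: "norm (zf s - 1) \<le> 6 + C3 * (1/2 + R)"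
      using zb1[OF Res d] mult_left_mono[OF ns C3_nonneg] by simp
    have P2: "norm (z powr of_real (t - 1)) \<le> R powr (t - 1)"
      using t nz by (simp add: norm_powr_real_powr' powr_mono2)
    have P3: "norm (exp (- z)) \<le> exp (- R / cc)" using Rez by simp
    have "norm (hh t z) = norm (zf s - 1) * (norm (z powr of_real (t - 1)) * norm (exp (- z)))"
      by (simp add: hh_def s_def norm_mult)
    also have "\<dots> \<le> (6 + C3 * (1/2 + R)) * (R powr (t - 1) * exp (- R / cc))"
      by (intro mult_mono P1 P2 P3) (use C3_nonneg R in auto)
    finally show ?thesis by (simp add: B_def mult_ac)
  qed
  have I2a: "norm I2 \<le> B * norm (c - b)" by (rule has_contour_integral_bound_linepath[OF H2 B0 bnd])
  have cb: "norm (c - b) \<le> 2 * R"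
  proof -
    have A: "norm (c - b) \<le> R * norm ww + R"
      using norm_triangle_ineq4[of c b] R by (simp add: b_def c_def norm_mult)
    have "R * norm ww \<le> R" using mult_left_mono[OF norm_ww, of R] R by simp
    thus ?thesis using A by linarith
  qed
  have "norm I2 \<le> B * (2 * R)" using I2a mult_left_mono[OF cb B0] by linarith
  hence I2b: "norm I2 \<le> 2 * R * B" by (simp add: mult_ac)
  have "integral {0..R} (\<lambda>x. hh t (of_real x)) - integral {0..R} (\<lambda>x. hh t (ww * of_real x) * ww) = - I2"
  proof -
    have "I1 + I3 = - I2" using sum0 by (simp add: eq_neg_iff_add_eq_0 add_ac)
    thus ?thesis unfolding integral_unique[OF G1] integral_unique[OF G2] by simp
  qed
  thus "norm (integral {0..R} (\<lambda>x. hh t (of_real x)) - integral {0..R} (\<lambda>x. hh t (ww * of_real x) * ww))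
           \<le> 2 * R * ((6 + C3 * (1/2 + R)) * R powr (t - 1) * exp (- R / cc))"
    using I2b by (simp add: B_def)
qed


definition gdom :: "real \<Rightarrow> real \<Rightarrow> real" where
  "gdom t x = (1 + x) * x powr (t - 1) / exp x"

lemma dom_nonneg: "0 \<le> x \<Longrightarrow> 0 \<le> gdom t x"
  unfolding gdom_def by simp

lemma dom_int:
  assumes t: "1 < t"
  shows "(gdom t has_integral (Gamma t + Gamma (t + 1))) {0..}"
proof -
  have A: "((\<lambda>x. x powr (t - 1) / exp x) has_integral Gamma t) {0..}"
    by (rule Gamma_integral_real) (use t in simp)
  have B: "((\<lambda>x. x powr (t + 1 - 1) / exp x) has_integral Gamma (t + 1)) {0..}"
    by (rule Gamma_integral_real) (use t in simp)
  have "((\<lambda>x. x powr (t - 1) / exp x + x powr (t + 1 - 1) / exp x) has_integral (Gamma t + Gamma (t + 1))) {0..}"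
    by (rule has_integral_add[OF A B])
  moreover have "x powr (t - 1) / exp x + x powr (t + 1 - 1) / exp x = gdom t x" if x: "x \<in> {0..}" for x
  proof (cases "x = 0")
    case True thus ?thesis using t by (simp add: gdom_def)
  next
    case False
    hence x0: "0 < x" using x by simp
    have "x powr (t + 1 - 1) = x * x powr (t - 1)"
      using powr_add[of x 1 "t - 1"] x0 by simp
    thus ?thesis by (simp add: gdom_def field_simps)
  qed
  ultimately show ?thesis by (rule has_integral_eq[rotated]) auto
qed

lemma dom_integrable: "1 < t \<Longrightarrow> gdom t integrable_on {0..}"
  using dom_int by blast

lemma Gamma_succ: "0 < t \<Longrightarrow> Gamma (t + 1) = t * Gamma (t::real)"
  by (rule Gamma_plus1) (auto simp: nonpos_Ints_def)

definition qq :: real where "qq = norm ww"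

lemma qq_le: "qq \<le> 9/10"
proof -
  have "qq = norm (1 - \<i>) / cc" unfolding qq_def ww_def using cc_pos by (simp add: norm_divide)
  also have "norm (1 - \<i>) = sqrt 2" by (simp add: cmod_def)
  also have "sqrt 2 / cc \<le> 9/10" using sqrt2_le cc_ge ln2_ge_two_thirds cc_pos
    by (simp add: powr_half_sqrt cc_def divide_le_eq)
  finally show ?thesis .
qed

lemma qq_pos: "0 < qq"
  unfolding qq_def ww_def using cc_pos by (simp add: complex_eq_iff)

lemma g1_bound:
  assumes t: "1 < t" and x: "0 \<le> x"
  shows "norm (hh t (of_real x)) \<le> (6 + C3) * gdom t x"
proof -
  define s where "s = 1/2 + \<i> * (of_real x :: complex)"
  have Res: "1/2 \<le> Re s" by (simp add: s_def)
  have "1/4 \<le> \<bar>Re (s - 1)\<bar>" by (simp add: s_def)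
  also have "\<dots> \<le> norm (s - 1)" by (rule abs_Re_le_cmod)
  finally have d: "1/4 \<le> norm (s - 1)" .
  have ns: "norm s \<le> 1/2 + x"
    using norm_triangle_ineq[of "1/2" "\<i> * of_real x"] x by (simp add: s_def norm_mult)
  have P1: "norm (zf s - 1) \<le> (6 + C3) * (1 + x)"
  proof -
    have "norm (zf s - 1) \<le> 6 + C3 * norm s" by (rule zb1[OF Res d])
    also have "\<dots> \<le> 6 + C3 * (1/2 + x)" by (intro add_left_mono mult_left_mono ns C3_nonneg)
    also have "\<dots> \<le> (6 + C3) * (1 + x)" using x C3_nonneg by (simp add: algebra_simps mult_nonneg_nonneg)
    finally show ?thesis .
  qed
  have "norm (hh t (of_real x)) = norm (zf s - 1) * (x powr (t - 1) * exp (- x))"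
    using x by (simp add: hh_def s_def norm_mult norm_ofreal_powr)
  also have "\<dots> \<le> ((6 + C3) * (1 + x)) * (x powr (t - 1) * exp (- x))"
    by (intro mult_right_mono P1) simp
  also have "\<dots> = (6 + C3) * gdom t x" by (simp add: gdom_def exp_minus field_simps)
  finally show ?thesis .
qed

lemma g2_bound:
  assumes t: "1 < t" and x: "0 \<le> x"
  shows "norm (hh t (ww * of_real x) * ww) \<le> KK * qq powr t * gdom t x"
proof -
  define r where "r = x / cc"
  have r: "0 \<le> r" "r \<le> x" using x cc_ge cc_pos by (auto simp: r_def divide_le_eq mult_le_cancel_left1)
  have s_eq: "1/2 + \<i> * (ww * of_real x) = 1/2 + of_real r + \<i> * of_real r"
    unfolding r_def by (simp add: complex_eq_iff Re_ww Im_ww)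
  have KK0: "0 \<le> KK" unfolding KK_def using C3_nonneg CZ_nonneg by simp
  have P1: "norm (zf (1/2 + \<i> * (ww * of_real x)) - 1) \<le> KK * (1 + x) * 2 powr (- r)"
  proof -
    have "norm (zf (1/2 + \<i> * (ww * of_real x)) - 1) \<le> KK * (1 + r) * 2 powr (- r)"
      unfolding s_eq by (rule ray_bound[OF r(1)])
    also have "\<dots> \<le> KK * (1 + x) * 2 powr (- r)"
      by (intro mult_right_mono mult_left_mono) (use r KK0 in auto)
    finally show ?thesis .
  qed
  have P2: "norm ((ww * of_real x) powr of_real (t - 1)) = qq powr (t - 1) * x powr (t - 1)"
    using x by (simp add: norm_powr_real_powr' norm_mult qq_def powr_mult)
  have P3: "norm (exp (- (ww * of_real x))) = exp (- r)"
    by (simp add: Re_ww r_def)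
  have E: "2 powr (- r) * exp (- r) = exp (- x)"
  proof -
    have "2 powr (- r) * exp (- r) = exp (- r * ln 2) * exp (- r)" by (simp add: powr_def)
    also have "\<dots> = exp (- (r * cc))" by (simp add: cc_def exp_add[symmetric] algebra_simps)
    also have "r * cc = x" using cc_pos by (simp add: r_def)
    finally show ?thesis .
  qed
  have "norm (hh t (ww * of_real x) * ww)
        = norm (zf (1/2 + \<i> * (ww * of_real x)) - 1) * (qq powr (t - 1) * x powr (t - 1) * exp (- r)) * qq"
    unfolding hh_def norm_mult P2 P3 qq_def by simp
  also have "\<dots> \<le> (KK * (1 + x) * 2 powr (- r)) * (qq powr (t - 1) * x powr (t - 1) * exp (- r)) * qq"
    by (intro mult_right_mono P1) (use qq_pos in auto)
  also have "\<dots> = KK * (qq powr (t - 1) * qq) * ((1 + x) * x powr (t - 1) * (2 powr (- r) * exp (- r)))"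
    by (simp add: mult_ac)
  also have "qq powr (t - 1) * qq = qq powr t"
    using powr_add[of qq "t - 1" 1] qq_pos by simp
  also have "KK * qq powr t * ((1 + x) * x powr (t - 1) * (2 powr (- r) * exp (- r))) = KK * qq powr t * gdom t x"
    unfolding E by (simp add: gdom_def exp_minus field_simps)
  finally show ?thesis .
qed


lemma powr_exp_lim: "((\<lambda>R::real. R powr a * exp (- R / 2)) \<longlongrightarrow> 0) at_top"
  by real_asymp

lemma g1_cont: "1 < t \<Longrightarrow> continuous_on {0..} (\<lambda>x. hh t (of_real x))"
  by (rule continuous_on_compose2[OF hh_cont]) (auto intro!: continuous_intros simp: QQ_def)

lemma g2_cont: "1 < t \<Longrightarrow> continuous_on {0..} (\<lambda>x. hh t (ww * of_real x) * ww)"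
proof -
  assume t: "1 < t"
  have "continuous_on {0..} (\<lambda>x. hh t (ww * of_real x))"
    by (rule continuous_on_compose2[OF hh_cont[OF t]])
       (use cc_pos in \<open>auto intro!: continuous_intros simp: QQ_def Re_ww Im_ww\<close>)
  thus ?thesis by (intro continuous_intros)
qed

lemma sets_atLeast_leb: "{0::real..} \<in> sets lebesgue"
  by simp

lemma gdom_int_c: "1 < t \<Longrightarrow> (\<lambda>x. c * gdom t x) integrable_on {0..}"
  using has_integral_mult_right[OF dom_int, of t c] by blast

lemma g1_abs:
  assumes t: "1 < t"
  shows "(\<lambda>x. hh t (of_real x)) absolutely_integrable_on {0..}"
proof (rule measurable_bounded_by_integrable_imp_absolutely_integrable[where g = "\<lambda>x. (6 + C3) * gdom t x"])
  show "(\<lambda>x. hh t (of_real x)) \<in> borel_measurable (lebesgue_on {0..})"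
    by (rule continuous_imp_measurable_on_sets_lebesgue[OF g1_cont[OF t]]) simp
  show "(\<lambda>x. (6 + C3) * gdom t x) integrable_on {0..}" by (rule gdom_int_c[OF t])
  show "norm (hh t (of_real x)) \<le> (6 + C3) * gdom t x" if "x \<in> {0..}" for x
    using g1_bound[OF t] that by simp
qed simp

lemma g2_abs:
  assumes t: "1 < t"
  shows "(\<lambda>x. hh t (ww * of_real x) * ww) absolutely_integrable_on {0..}"
proof (rule measurable_bounded_by_integrable_imp_absolutely_integrable[where g = "\<lambda>x. KK * qq powr t * gdom t x"])
  show "(\<lambda>x. hh t (ww * of_real x) * ww) \<in> borel_measurable (lebesgue_on {0..})"
    by (rule continuous_imp_measurable_on_sets_lebesgue[OF g2_cont[OF t]]) simp
  show "(\<lambda>x. KK * qq powr t * gdom t x) integrable_on {0..}" by (rule gdom_int_c[OF t])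
  show "norm (hh t (ww * of_real x) * ww) \<le> KK * qq powr t * gdom t x" if "x \<in> {0..}" for x
    using g2_bound[OF t] that by simp
qed simp

lemma int_lim:
  fixes g :: "real \<Rightarrow> complex"
  assumes g: "g absolutely_integrable_on {0..}"
  shows "((\<lambda>R. integral {0..R} g) \<longlongrightarrow> integral {0..} g) at_top"
proof -
  have "((\<lambda>b. set_lebesgue_integral lebesgue {0..b} g) \<longlongrightarrow> set_lebesgue_integral lebesgue {0..} g) at_top"
    by (rule tendsto_set_lebesgue_integral_at_top[OF _ g]) simp
  moreover have "(\<lambda>b. set_lebesgue_integral lebesgue {0..b} g) = (\<lambda>b. integral {0..b} g)"
    by (rule ext, rule set_lebesgue_integral_eq_integral(2), rule absolutely_integrable_on_subinterval[OF g]) auto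
  moreover have "set_lebesgue_integral lebesgue {0..} g = integral {0..} g"
    by (rule set_lebesgue_integral_eq_integral(2)[OF g])
  ultimately show ?thesis by simp
qed

lemma E_lim: "((\<lambda>R. 2 * R * ((6 + C3 * (1/2 + R)) * R powr (t - 1) * exp (- R / cc))) \<longlongrightarrow> 0) at_top"
proof (rule tendsto_sandwich[where f = "\<lambda>_. 0"])
  let ?U = "\<lambda>R. (12 + C3) * (R powr t * exp (- R / 2)) + 2 * C3 * (R powr (t + 1) * exp (- R / 2))"
  show "((\<lambda>R. ?U R) \<longlongrightarrow> 0) at_top"
    using tendsto_add[OF tendsto_mult_right_zero[OF powr_exp_lim[of t], of "12 + C3"]
                         tendsto_mult_right_zero[OF powr_exp_lim[of "t+1"], of "2 * C3"]] by simp
  show "\<forall>\<^sub>F R in at_top. 0 \<le> 2 * R * ((6 + C3 * (1/2 + R)) * R powr (t - 1) * exp (- R / cc))"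
    using eventually_ge_at_top[of 1] by eventually_elim (use C3_nonneg in simp)
  show "\<forall>\<^sub>F R in at_top. 2 * R * ((6 + C3 * (1/2 + R)) * R powr (t - 1) * exp (- R / cc)) \<le> ?U R"
    using eventually_ge_at_top[of 1]
  proof eventually_elim
    case (elim R)
    have "R / 2 \<le> R / cc" by (rule divide_left_mono) (use elim cc_le cc_pos in auto)
    hence e: "exp (- R / cc) \<le> exp (- R / 2)" by simp
    have p1: "R * R powr (t - 1) = R powr t" using powr_add[of R 1 "t - 1"] elim by simp
    have p2: "R * R powr t = R powr (t + 1)" using powr_add[of R t 1] elim by (simp add: mult.commute)
    have "2 * R * ((6 + C3 * (1/2 + R)) * R powr (t - 1) * exp (- R / cc))
          = ((12 + C3) * (R * R powr (t - 1)) + 2 * C3 * (R * (R * R powr (t - 1)))) * exp (- R / cc)"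
      by (simp add: algebra_simps)
    also have "\<dots> \<le> ((12 + C3) * (R * R powr (t - 1)) + 2 * C3 * (R * (R * R powr (t - 1)))) * exp (- R / 2)"
      by (intro mult_left_mono e) (use elim C3_nonneg in simp)
    also have "\<dots> = ?U R" unfolding p1 p2 by (simp add: algebra_simps)
    finally show ?case .
  qed
qed simp

lemma J_eq:
  assumes t: "1 < t"
  shows "integral {0..} (\<lambda>x. hh t (of_real x)) = integral {0..} (\<lambda>x. hh t (ww * of_real x) * ww)"
proof -
  let ?F = "\<lambda>R. integral {0..R} (\<lambda>x. hh t (of_real x)) - integral {0..R} (\<lambda>x. hh t (ww * of_real x) * ww)"
  let ?J = "integral {0..} (\<lambda>x. hh t (of_real x)) - integral {0..} (\<lambda>x. hh t (ww * of_real x) * ww)"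
  have "(?F \<longlongrightarrow> ?J) at_top"
    by (intro tendsto_diff int_lim g1_abs g2_abs t)
  hence lim: "((\<lambda>R. norm (?F R)) \<longlongrightarrow> norm ?J) at_top" by (rule tendsto_norm)
  have "norm ?J \<le> 0"
  proof (rule tendsto_le[OF _ E_lim lim])
    show "\<forall>\<^sub>F R in at_top. norm (?F R) \<le> 2 * R * ((6 + C3 * (1/2 + R)) * R powr (t - 1) * exp (- R / cc))"
      using eventually_ge_at_top[of 1] by eventually_elim (rule contour_main(3)[OF t])
  qed simp
  thus ?thesis by simp
qed

lemma J1_bound:
  assumes t: "1 < t"
  shows "norm (integral {0..} (\<lambda>x. hh t (of_real x))) \<le> KK * qq powr t * (Gamma t + Gamma (t + 1))"
proof -
  have i2: "(\<lambda>x. hh t (ww * of_real x) * ww) integrable_on {0..}"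
    by (rule set_lebesgue_integral_eq_integral(1)[OF g2_abs[OF t]])
  have di: "((\<lambda>x. KK * qq powr t * gdom t x) has_integral (KK * qq powr t * (Gamma t + Gamma (t + 1)))) {0..}"
    by (rule has_integral_mult_right[OF dom_int[OF t]])
  have "norm (integral {0..} (\<lambda>x. hh t (ww * of_real x) * ww)) \<le> integral {0..} (\<lambda>x. KK * qq powr t * gdom t x)"
    by (rule integral_norm_bound_integral[OF i2]) (use di g2_bound[OF t] in auto)
  also have "\<dots> = KK * qq powr t * (Gamma t + Gamma (t + 1))" by (rule integral_unique[OF di])
  finally show ?thesis unfolding J_eq[OF t] .
qed


lemma Z_eq: "riemann_zeta (1/2 + \<i> * of_real x) = zf (1/2 + \<i> * of_real x)"
proof (rule zeta_eq)
  show "1/2 + \<i> * of_real x \<noteq> 1"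
  proof
    assume "1/2 + \<i> * of_real x = 1"
    hence "Re (1/2 + \<i> * of_real x) = Re 1" by simp
    thus False by simp
  qed
qed

lemma Z_cont: "continuous_on UNIV (\<lambda>x::real. zf (1/2 + \<i> * of_real x))"
proof (rule continuous_on_compose2[OF holomorphic_on_imp_continuous_on[OF zf_holo]])
  show "continuous_on UNIV (\<lambda>x::real. 1/2 + \<i> * of_real x)" by (intro continuous_intros)
  show "(\<lambda>x::real. 1/2 + \<i> * of_real x) ` UNIV \<subseteq> - {1}"
  proof clarsimp
    fix x :: real assume "1/2 + \<i> * of_real x = 1"
    hence "Re (1/2 + \<i> * of_real x) = Re 1" by simp
    thus False by simp
  qed
qed

lemma gd_nonneg: "0 < t \<Longrightarrow> 0 \<le> gamma_density t x"
  unfolding gamma_density_def by simp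

lemma gd_meas: "gamma_density t \<in> borel_measurable borel"
  unfolding gamma_density_def by measurable

lemma pointwise:
  assumes t: "1 < t"
  shows "gamma_density t x *\<^sub>R (zf (1/2 + \<i> * of_real x) - 1)
         = (1 / Gamma t) *\<^sub>R (indicator {0..} x *\<^sub>R hh t (of_real x))"
proof (cases "0 < x")
  case True
  have p: "(of_real x :: complex) powr of_real (t - 1) = of_real (x powr (t - 1))"
    using True by (intro powr_of_real) simp
  have e: "exp (- (of_real x :: complex)) = of_real (exp (- x))"
    by (simp flip: exp_of_real)
  have "hh t (of_real x) = (zf (1/2 + \<i> * of_real x) - 1) * of_real (x powr (t - 1) * exp (- x))"
    unfolding hh_def p e by simp
  thus ?thesis using True by (simp add: gamma_density_def scaleR_conv_of_real field_simps)
next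
  case False
  show ?thesis
  proof (cases "x = 0")
    case True thus ?thesis by (simp add: gamma_density_def hh_def)
  next
    case False
    hence "x < 0" using \<open>\<not> 0 < x\<close> by simp
    thus ?thesis by (simp add: gamma_density_def)
  qed
qed

lemma main_bound:
  fixes M :: "'a measure" and X :: "'a \<Rightarrow> real"
  assumes P: "prob_space M" and t: "1 < t"
    and D: "distributed M lborel X (\<lambda>x. ennreal (gamma_density t x))"
  shows "integrable M (\<lambda>\<omega>. riemann_zeta (1/2 + \<i> * complex_of_real (X \<omega>))) \<and>
         cmod ((\<integral>\<omega>. riemann_zeta (1/2 + \<i> * complex_of_real (X \<omega>)) \<partial>M) - 1) \<le> KK * qq powr t * (1 + t)"
proof -
  interpret prob_space M by (rule P)
  define d where "d = gamma_density t"
  define Z where "Z x = zf (1/2 + \<i> * of_real x)" for x :: real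
  define g1 where "g1 x = hh t (of_real x)" for x :: real
  have ZZ: "riemann_zeta (1/2 + \<i> * complex_of_real x) = Z x" for x unfolding Z_def by (rule Z_eq)
  have Xm: "X \<in> measurable M lborel" by (rule distributed_measurable[OF D])
  have dens: "distr M lborel X = density lborel (\<lambda>x. ennreal (d x))"
    unfolding d_def by (rule distributed_distr_eq_density[OF D])
  have dm: "d \<in> borel_measurable lborel" unfolding d_def using gd_meas by simp
  have dnn: "AE x in lborel. 0 \<le> d x" unfolding d_def using t by (simp add: gd_nonneg)
  have Zm: "Z \<in> borel_measurable lborel"
    unfolding Z_def using borel_measurable_continuous_onI[OF Z_cont] by simp
  have onem: "(\<lambda>_. 1::complex) \<in> borel_measurable lborel" by simp
  have int_tr: "integrable M (\<lambda>\<omega>. f (X \<omega>)) \<longleftrightarrow> integrable lborel (\<lambda>x. d x *\<^sub>R f x)"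
    if fm: "f \<in> borel_measurable lborel" for f :: "real \<Rightarrow> complex"
  proof -
    have "integrable M (\<lambda>\<omega>. f (X \<omega>)) \<longleftrightarrow> integrable (distr M lborel X) f"
      by (rule integrable_distr_eq[symmetric]) (use Xm fm in auto)
    also have "\<dots> \<longleftrightarrow> integrable lborel (\<lambda>x. d x *\<^sub>R f x)"
      unfolding dens by (rule integrable_density[OF fm dm dnn])
    finally show ?thesis .
  qed
  have integ_tr: "(\<integral>\<omega>. f (X \<omega>) \<partial>M) = (\<integral>x. d x *\<^sub>R f x \<partial>lborel)"
    if fm: "f \<in> borel_measurable lborel" for f :: "real \<Rightarrow> complex"
  proof -
    have "(\<integral>\<omega>. f (X \<omega>) \<partial>M) = integral\<^sup>L (distr M lborel X) f"
      by (rule integral_distr[symmetric]) (use Xm fm in auto)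
    also have "\<dots> = (\<integral>x. d x *\<^sub>R f x \<partial>lborel)"
      unfolding dens by (rule integral_density[OF fm dm dnn])
    finally show ?thesis .
  qed
  have g1abs: "g1 absolutely_integrable_on {0..}" unfolding g1_def by (rule g1_abs[OF t])
  have indm: "(\<lambda>x. indicator {0..} x *\<^sub>R g1 x) \<in> borel_measurable borel"
    by (rule borel_measurable_continuous_on_indicator) (use g1_cont[OF t] in \<open>auto simp: g1_def\<close>)
  have indint: "integrable lborel (\<lambda>x. indicator {0..} x *\<^sub>R g1 x)"
    using g1abs indm unfolding set_integrable_def by (subst (asm) integrable_completion) auto
  have indval: "(\<integral>x. indicator {0..} x *\<^sub>R g1 x \<partial>lborel) = integral {0..} g1"
  proof -
    have "(\<integral>x. indicator {0..} x *\<^sub>R g1 x \<partial>lborel) = (\<integral>x. indicator {0..} x *\<^sub>R g1 x \<partial>lebesgue)"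
      by (rule integral_completion[symmetric]) (use indm in simp)
    also have "\<dots> = set_lebesgue_integral lebesgue {0..} g1" by (simp add: set_lebesgue_integral_def)
    also have "\<dots> = integral {0..} g1" by (rule set_lebesgue_integral_eq_integral(2)[OF g1abs])
    finally show ?thesis .
  qed
  have pw: "d x *\<^sub>R (Z x - 1) = (1 / Gamma t) *\<^sub>R (indicator {0..} x *\<^sub>R g1 x)" for x
    unfolding d_def Z_def g1_def by (rule pointwise[OF t])
  have int1: "integrable lborel (\<lambda>x. d x *\<^sub>R (Z x - 1))"
    unfolding pw by (intro integrable_scaleR_right indint)
  have int2: "integrable lborel (\<lambda>x. d x *\<^sub>R (1::complex))"
    using int_tr[OF onem] by simp
  have intZ: "integrable lborel (\<lambda>x. d x *\<^sub>R Z x)"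
  proof -
    have "integrable lborel (\<lambda>x. d x *\<^sub>R (Z x - 1) + d x *\<^sub>R (1::complex))"
      by (rule Bochner_Integration.integrable_add[OF int1 int2])
    thus ?thesis by (simp add: algebra_simps)
  qed
  have intM: "integrable M (\<lambda>\<omega>. Z (X \<omega>))" using int_tr[OF Zm] intZ by simp
  have EZ: "(\<integral>\<omega>. Z (X \<omega>) \<partial>M) = (\<integral>x. d x *\<^sub>R Z x \<partial>lborel)" by (rule integ_tr[OF Zm])
  have E1: "(1::complex) = (\<integral>x. d x *\<^sub>R (1::complex) \<partial>lborel)"
  proof -
    have "(\<integral>\<omega>. (1::complex) \<partial>M) = 1" by (simp add: prob_space)
    thus ?thesis using integ_tr[OF onem] by simp
  qed
  have "(\<integral>\<omega>. Z (X \<omega>) \<partial>M) - 1 = (\<integral>x. d x *\<^sub>R Z x - d x *\<^sub>R (1::complex) \<partial>lborel)"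
    unfolding EZ by (subst E1) (rule Bochner_Integration.integral_diff[OF intZ int2, symmetric])
  also have "\<dots> = (\<integral>x. d x *\<^sub>R (Z x - 1) \<partial>lborel)" by (simp add: algebra_simps)
  also have "\<dots> = (1 / Gamma t) *\<^sub>R integral {0..} g1" by (simp only: pw integral_scaleR_right indval)
  finally have EE: "(\<integral>\<omega>. Z (X \<omega>) \<partial>M) - 1 = (1 / Gamma t) *\<^sub>R integral {0..} g1" .
  have Gp: "0 < Gamma t" using t by simp
  have "cmod ((\<integral>\<omega>. Z (X \<omega>) \<partial>M) - 1) = norm (integral {0..} g1) / Gamma t"
    unfolding EE using Gp by simp
  also have "\<dots> \<le> KK * qq powr t * (Gamma t + Gamma (t + 1)) / Gamma t"
    by (intro divide_right_mono) (use J1_bound[OF t] Gp in \<open>auto simp: g1_def[abs_def]\<close>)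
  also have "\<dots> = KK * qq powr t * (1 + t)"
  proof -
    have eq: "KK * qq powr t * (Gamma t + Gamma (t + 1)) = (KK * qq powr t * (1 + t)) * Gamma t"
      using Gamma_succ[of t] t by (simp add: algebra_simps)
    have Gn: "Gamma t \<noteq> 0" using Gp by simp
    show ?thesis unfolding eq using Gn by (rule nonzero_mult_div_cancel_right)
  qed
  finally show ?thesis unfolding ZZ using intM by simp
qed

lemma asym: "\<forall>\<^sub>F t in at_top. (1 + t) * (9/10) powr t \<le> t powr (- real N)"
  by real_asymp

theorem lemma3p2:
  fixes M :: "'a measure" and X :: "real \<Rightarrow> 'a \<Rightarrow> real"
  assumes "prob_space M"
    and "\<And>t. 0 < t \<Longrightarrow> distributed M lborel (X t) (\<lambda>x. ennreal (gamma_density t x))"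
  shows "\<forall>N::nat. \<exists>C::real. \<forall>\<^sub>F t in at_top.
           integrable M (\<lambda>\<omega>. riemann_zeta (1/2 + \<i> * complex_of_real (X t \<omega>))) \<and>
           cmod ((\<integral>\<omega>. riemann_zeta (1/2 + \<i> * complex_of_real (X t \<omega>)) \<partial>M) - 1)
             \<le> C * t powr (- real N)"
proof
  fix N :: nat
  have KK0: "0 \<le> KK" unfolding KK_def using C3_nonneg CZ_nonneg by simp
  show "\<exists>C::real. \<forall>\<^sub>F t in at_top.
           integrable M (\<lambda>\<omega>. riemann_zeta (1/2 + \<i> * complex_of_real (X t \<omega>))) \<and>
           cmod ((\<integral>\<omega>. riemann_zeta (1/2 + \<i> * complex_of_real (X t \<omega>)) \<partial>M) - 1)
             \<le> C * t powr (- real N)"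
  proof (intro exI[of _ KK])
    show "\<forall>\<^sub>F t in at_top.
           integrable M (\<lambda>\<omega>. riemann_zeta (1/2 + \<i> * complex_of_real (X t \<omega>))) \<and>
           cmod ((\<integral>\<omega>. riemann_zeta (1/2 + \<i> * complex_of_real (X t \<omega>)) \<partial>M) - 1)
             \<le> KK * t powr (- real N)"
      using eventually_gt_at_top[of 1] asym[of N]
    proof eventually_elim
      case (elim t)
      have t: "1 < t" using elim by simp
      have mb: "integrable M (\<lambda>\<omega>. riemann_zeta (1/2 + \<i> * complex_of_real (X t \<omega>))) \<and>
         cmod ((\<integral>\<omega>. riemann_zeta (1/2 + \<i> * complex_of_real (X t \<omega>)) \<partial>M) - 1) \<le> KK * qq powr t * (1 + t)"
        by (rule main_bound[OF assms(1) t assms(2)]) (use t in simp)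
      have "qq powr t \<le> (9/10) powr t" by (rule powr_mono2) (use t qq_le qq_pos in auto)
      hence "KK * qq powr t * (1 + t) \<le> KK * ((1 + t) * (9/10) powr t)"
        using KK0 t by (simp add: mult_left_mono mult_right_mono mult_ac)
      also have "\<dots> \<le> KK * t powr (- real N)" by (rule mult_left_mono[OF _ KK0]) (use elim in simp)
      finally show ?case using mb by simp
    qed
  qed
qed


end
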